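(* Fix $n\ge 2$ and let $W\subseteq\{1,\dots,n\}^{\mathbb{Z}}$ be an infinite totally transitive subshift. Then there is a sequence of subshifts $X_m\subseteq\{1,\dots,n\}^{\mathbb{Z}}$ such that each $(X_m,\sigma)$ is a CAM $\mathbb{Z}$-system and $X_m\to W$ in the Hausdorff metric on closed subsets of $\{1,\dots,n\}^{\mathbb{Z}}$.
   Context: $\{1,\dots,n\}^{\mathbb{Z}}$ carries the metric $d(x,y)=2^{-\inf\{|k|:x_k\neq y_k\}}$ and the shift $(\sigma x)_k=x_{k+1}$; a subshift is a closed $\sigma$-invariant subset. A subshift $W$ is totally transitive if $(W,\sigma^k)$ is topologically transitive for every $k\ge1$. A $\mathbb{Z}$-system $(X,T)$ is a compact metric space with a homeomorphism $T$; it is topologically transitive if for all nonempty open $U,V$ there is $j$ with $T^jU\cap V\neq\emptyset$; the action is faithful if $T^j=\mathrm{id}$ only for $j=0$; a point is periodic if its orbit is finite. The system is chaotic almost minimal (CAM) if: (1) it is topologically transitive and the action is faithful; (2) the periodic points are dense; (3) every proper closed $T$-invariant subset is finite. *)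

theory Defs
  imports Complex_Main
begin

type_synonym config = "int \<Rightarrow> nat"

definition full_shift :: "nat \<Rightarrow> config set" where
  "full_shift n = {x. \<forall>k. x k \<in> {1..n}}"

definition sdist :: "config \<Rightarrow> config \<Rightarrow> real" where
  "sdist x y = (if x = y then 0
     else (1/2) ^ (LEAST m. \<exists>k. nat \<bar>k\<bar> = m \<and> x k \<noteq> y k))"

definition shift :: "config \<Rightarrow> config" where
  "shift x = (\<lambda>k. x (k + 1))"

definition shift_pow :: "int \<Rightarrow> config \<Rightarrow> config" where
  "shift_pow j x = (\<lambda>k. x (k + j))"

definition closed_in_shift :: "nat \<Rightarrow> config set \<Rightarrow> bool" where
  "closed_in_shift n A \<longleftrightarrow> A \<subseteq> full_shift n \<and>
     (\<forall>x \<in> full_shift n. (\<forall>e>0. \<exists>y\<in>A. sdist x y < e) \<longrightarrow> x \<in> A)"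

definition subshift :: "nat \<Rightarrow> config set \<Rightarrow> bool" where
  "subshift n X \<longleftrightarrow> closed_in_shift n X \<and> shift ` X = X"

definition open_in_X :: "config set \<Rightarrow> config set \<Rightarrow> bool" where
  "open_in_X X U \<longleftrightarrow> U \<subseteq> X \<and>
     (\<forall>x\<in>U. \<exists>e>0. \<forall>y\<in>X. sdist x y < e \<longrightarrow> y \<in> U)"

definition transitive_pow :: "config set \<Rightarrow> int \<Rightarrow> bool" where
  "transitive_pow X p \<longleftrightarrow>
     (\<forall>U V. open_in_X X U \<and> open_in_X X V \<and> U \<noteq> {} \<and> V \<noteq> {} \<longrightarrow>
        (\<exists>j::int. shift_pow (p * j) ` U \<inter> V \<noteq> {}))"

definition totally_transitive :: "config set \<Rightarrow> bool" where
  "totally_transitive X \<longleftrightarrow> (\<forall>k::nat. k \<ge> 1 \<longrightarrow> transitive_pow X (int k))"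

definition faithful :: "config set \<Rightarrow> bool" where
  "faithful X \<longleftrightarrow> (\<forall>j::int. (\<forall>x\<in>X. shift_pow j x = x) \<longrightarrow> j = 0)"

definition periodic_point :: "config set \<Rightarrow> config \<Rightarrow> bool" where
  "periodic_point X x \<longleftrightarrow> x \<in> X \<and> finite (range (\<lambda>j. shift_pow j x))"

definition CAM :: "config set \<Rightarrow> bool" where
  "CAM X \<longleftrightarrow>
     transitive_pow X 1 \<and> faithful X \<and>
     (\<forall>x\<in>X. \<forall>e>0. \<exists>p. periodic_point X p \<and> sdist x p < e) \<and>
     (\<forall>Y. Y \<subseteq> X \<and> Y \<noteq> X \<and>
          (\<forall>x\<in>X. (\<forall>e>0. \<exists>y\<in>Y. sdist x y < e) \<longrightarrow> x \<in> Y) \<and>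
          shift ` Y = Y \<longrightarrow> finite Y)"

definition hausdorff :: "config set \<Rightarrow> config set \<Rightarrow> real" where
  "hausdorff A B = max (SUP a\<in>A. INF b\<in>B. sdist a b) (SUP b\<in>B. INF a\<in>A. sdist a b)"

end

theory Submission
  imports Defs
begin

definition sub :: "nat list \<Rightarrow> nat list \<Rightarrow> bool" where
  "sub w v \<longleftrightarrow> (\<exists>p. p + length w \<le> length v \<and> (\<forall>t<length w. w!t = v!(p+t)))"

lemma sub_refl[simp]: "sub w w"
  unfolding sub_def by (rule exI[of _ 0]) auto

lemma sub_trans: "sub u v \<Longrightarrow> sub v w \<Longrightarrow> sub u w"
  unfolding sub_def
  apply clarify
  subgoal for p q by (rule exI[of _ "q+p"]) (auto simp: add.assoc)
  done

lemma sub_appendL: "sub w v \<Longrightarrow> sub w (u @ v)"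
  unfolding sub_def
  apply clarify
  subgoal for p by (rule exI[of _ "length u + p"]) (auto simp: nth_append)
  done

lemma sub_appendR: "sub w v \<Longrightarrow> sub w (v @ u)"
  unfolding sub_def
  apply clarify
  subgoal for p by (rule exI[of _ "p"]) (auto simp: nth_append)
  done

lemma sub_app1: "sub w (w @ u)" by (rule sub_appendR) simp
lemma sub_app2: "sub w (u @ w)" by (rule sub_appendL) simp

lemma sub_take_drop: "p + l \<le> length v \<Longrightarrow> sub (take l (drop p v)) v"
  unfolding sub_def by (rule exI[of _ p]) auto

lemma sub_length: "sub w v \<Longrightarrow> length w \<le> length v"
  unfolding sub_def by auto

lemma sub_set: "sub w v \<Longrightarrow> set w \<subseteq> set v"
  unfolding sub_def
  apply (clarsimp simp: in_set_conv_nth)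
  subgoal for p i by (rule exI[of _ "p+i"]) auto
  done

lemma sub_eq_take_drop: "sub w v \<Longrightarrow> \<exists>p. p + length w \<le> length v \<and> w = take (length w) (drop p v)"
  unfolding sub_def
  apply clarify
  subgoal for p by (rule exI[of _ p]) (auto intro: nth_equalityI)
  done

definition window :: "config \<Rightarrow> int \<Rightarrow> nat \<Rightarrow> nat list" where
  "window x i l = map (\<lambda>t. x (i + int t)) [0..<l]"

lemma window_length[simp]: "length (window x i l) = l"
  unfolding window_def by simp

lemma window_nth[simp]: "t < l \<Longrightarrow> window x i l ! t = x (i + int t)"
  unfolding window_def by simp

lemma window_eq_iff: "window x i l = window y j l \<longleftrightarrow> (\<forall>t<l. x (i + int t) = y (j + int t))"
  by (auto simp: list_eq_iff_nth_eq)

lemma sub_window: "a \<le> d \<Longrightarrow> d + int l \<le> a + int L \<Longrightarrow> sub (window z d l) (window z a L)"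
  unfolding sub_def
  apply (rule exI[of _ "nat (d - a)"])
  apply auto
  done

lemma shift_pow_apply: "shift_pow j x k = x (k + j)"
  by (simp add: shift_pow_def)

lemma shift_pow_add: "shift_pow i (shift_pow j x) = shift_pow (i + j) x"
  by (auto simp: shift_pow_def add_ac)

lemma shift_pow_0[simp]: "shift_pow 0 x = x"
  by (auto simp: shift_pow_def)

lemma shift_eq: "shift = shift_pow 1"
  by (auto simp: shift_def shift_pow_def fun_eq_iff)

lemma window_shift_pow: "window (shift_pow j x) i l = window x (i + j) l"
  unfolding window_def by (auto simp: add_ac shift_pow_apply)

lemma shift_invariant_pow:
  assumes "shift ` Y = Y" "y \<in> Y"
  shows "shift_pow j y \<in> Y"
proof -
  have up: "shift_pow 1 z \<in> Y" if "z \<in> Y" for z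
    using assms(1) that by (auto simp: shift_eq)
  have down: "shift_pow (-1) z \<in> Y" if "z \<in> Y" for z
  proof -
    from that assms(1) obtain z' where "z' \<in> Y" "z = shift_pow 1 z'" by (auto simp: shift_eq)
    then show ?thesis by (simp add: shift_pow_add)
  qed
  have "\<forall>y\<in>Y. shift_pow (int k) y \<in> Y \<and> shift_pow (- int k) y \<in> Y" for k
  proof (induction k)
    case 0 then show ?case by simp
  next
    case (Suc k)
    show ?case
    proof
      fix y assume "y \<in> Y"
      have "shift_pow (int (Suc k)) y = shift_pow 1 (shift_pow (int k) y)"
        by (simp add: shift_pow_add add_ac)
      moreover have "shift_pow (- int (Suc k)) y = shift_pow (-1) (shift_pow (- int k) y)"
        by (simp add: shift_pow_add)
      ultimately show "shift_pow (int (Suc k)) y \<in> Y \<and> shift_pow (- int (Suc k)) y \<in> Y"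
        using Suc \<open>y \<in> Y\<close> up down by auto
    qed
  qed
  then show ?thesis using assms(2)
    by (cases j rule: int_cases2) auto
qed

lemma sdist_agree:
  assumes "\<And>k. \<bar>k\<bar> \<le> int r \<Longrightarrow> x k = y k"
  shows "sdist x y \<le> (1/2)^(Suc r)"
proof (cases "x = y")
  case True then show ?thesis by (simp add: sdist_def)
next
  case False
  then obtain k where k: "x k \<noteq> y k" by auto
  let ?P = "\<lambda>m. \<exists>k. nat \<bar>k\<bar> = m \<and> x k \<noteq> y k"
  have "?P (LEAST m. ?P m)" by (rule LeastI[of _ "nat \<bar>k\<bar>"]) (use k in auto)
  then obtain k' where k': "nat \<bar>k'\<bar> = (LEAST m. ?P m)" "x k' \<noteq> y k'" by auto
  with assms have "\<bar>k'\<bar> > int r" by force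
  then have "Suc r \<le> (LEAST m. ?P m)" using k'(1) by linarith
  then have "(1/2::real)^(LEAST m. ?P m) \<le> (1/2)^(Suc r)"
    by (rule power_decreasing) auto
  then show ?thesis using False by (simp add: sdist_def)
qed

lemma sdist_small:
  assumes "sdist x y < (1/2)^r" "\<bar>k\<bar> \<le> int r"
  shows "x k = y k"
proof (rule ccontr)
  assume ne: "x k \<noteq> y k"
  then have "x \<noteq> y" by auto
  let ?P = "\<lambda>m. \<exists>k. nat \<bar>k\<bar> = m \<and> x k \<noteq> y k"
  have "(LEAST m. ?P m) \<le> nat \<bar>k\<bar>" by (rule Least_le) (use ne in auto)
  also have "\<dots> \<le> r" using assms(2) by linarith
  finally have "(1/2::real)^r \<le> (1/2)^(LEAST m. ?P m)"
    by (rule power_decreasing) auto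
  then show False using assms(1) \<open>x \<noteq> y\<close> by (simp add: sdist_def)
qed

lemma sdist_nonneg: "sdist x y \<ge> 0"
  by (simp add: sdist_def)

lemma sdist_le1: "sdist x y \<le> 1"
  by (simp add: sdist_def power_le_one)

lemma exists_small_pow: "e > (0::real) \<Longrightarrow> \<exists>r. (1/2::real)^r < e"
  by (rule real_arch_pow_inv) auto

lemma window_agree_sdist:
  assumes "window x (- int r) (2*r+1) = window y (- int r) (2*r+1)"
  shows "sdist x y \<le> (1/2)^(Suc r)"
proof (rule sdist_agree)
  fix k :: int assume "\<bar>k\<bar> \<le> int r"
  then have "nat (k + int r) < 2*r+1" by linarith
  with assms have "x (- int r + int (nat (k + int r))) = y (- int r + int (nat (k + int r)))"
    by (auto simp: window_eq_iff)
  moreover have "- int r + int (nat (k + int r)) = k" using \<open>\<bar>k\<bar> \<le> int r\<close> by linarith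
  ultimately show "x k = y k" by simp
qed

lemma open_ball_window:
  assumes "open_in_X X U" "x \<in> U"
  shows "\<exists>r. \<forall>y\<in>X. window x (- int r) (2*r+1) = window y (- int r) (2*r+1) \<longrightarrow> y \<in> U"
proof -
  from assms obtain e where e: "e > 0" "\<forall>y\<in>X. sdist x y < e \<longrightarrow> y \<in> U"
    unfolding open_in_X_def by blast
  obtain r where r: "(1/2::real)^r < e" using exists_small_pow[OF e(1)] by blast
  have "(1/2::real)^(Suc r) \<le> (1/2)^r" by (rule power_decreasing) auto
  show ?thesis
    apply (rule exI[of _ r])
    using window_agree_sdist e r \<open>(1/2::real)^(Suc r) \<le> (1/2)^r\<close>
    by (meson le_less_trans order_le_less_trans)
qed


section \<open>Powers and periodic points\<close>

definition pow :: "nat \<Rightarrow> nat list \<Rightarrow> nat list" where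
  "pow c P = concat (replicate c P)"

lemma pow_0[simp]: "pow 0 P = []" by (simp add: pow_def)
lemma pow_Suc: "pow (Suc c) P = P @ pow c P" by (simp add: pow_def)
lemma pow_add: "pow (c + d) P = pow c P @ pow d P" by (simp add: pow_def replicate_add)
lemma pow_Suc2: "pow (Suc c) P = pow c P @ P"
  using pow_add[of c 1 P] by (simp add: pow_def)
lemma pow_length[simp]: "length (pow c P) = c * length P"
  by (induction c) (auto simp: pow_Suc)
lemma pow_set: "set (pow c P) \<subseteq> set P" by (auto simp: pow_def)

lemma nth_pow: "k < c * length P \<Longrightarrow> pow c P ! k = P ! (k mod length P)"
proof (induction c arbitrary: k)
  case 0 then show ?case by simp
next
  case (Suc c)
  show ?case
  proof (cases "k < length P")
    case True then show ?thesis by (simp add: pow_Suc nth_append)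
  next
    case False
    then have "k - length P < c * length P" using Suc.prems by auto
    then have "pow c P ! (k - length P) = P ! ((k - length P) mod length P)" by (rule Suc.IH)
    moreover have "(k - length P) mod length P = k mod length P"
      using False by (simp add: mod_if)
    ultimately show ?thesis using False by (simp add: pow_Suc nth_append)
  qed
qed

lemma sub_pow_mono: "c \<le> d \<Longrightarrow> sub (pow c P) (pow d P)"
proof -
  assume "c \<le> d"
  then obtain e where "d = c + e" by (auto simp: le_iff_add)
  then show ?thesis by (simp add: pow_add sub_app1)
qed

definition pt :: "nat list \<Rightarrow> config" where
  "pt P t = P ! nat (t mod int (length P))"

lemma window_pt_pow:
  assumes "P \<noteq> []"
  shows "sub (window (pt P) s l) (pow (l div length P + 2) P)"
proof -
  let ?L = "length P" let ?q = "nat (s mod int ?L)"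
  have L: "?L > 0" using assms by simp
  have q: "?q < ?L" using L by (simp add: nat_less_iff)
  have bound: "?q + l \<le> (l div ?L + 2) * ?L"
  proof -
    have m: "l mod ?L < ?L" using L by simp
    have "l div ?L * ?L + l mod ?L = l" by (rule div_mult_mod_eq)
    moreover have "(l div ?L + 1) * ?L = l div ?L * ?L + ?L" by simp
    ultimately have "l < (l div ?L + 1) * ?L" using m by linarith
    then show ?thesis using q by (simp add: algebra_simps)
  qed
  show ?thesis unfolding sub_def
  proof (rule exI[of _ ?q], intro conjI allI impI)
    show "?q + length (window (pt P) s l) \<le> length (pow (l div ?L + 2) P)" using bound by simp
  next
    fix t assume "t < length (window (pt P) s l)"
    then have t: "t < l" by simp
    have "pow (l div ?L + 2) P ! (?q + t) = P ! ((?q + t) mod ?L)"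
      using bound t by (intro nth_pow) auto
    moreover have "int ((?q + t) mod ?L) = (s + int t) mod int ?L"
    proof -
      have q': "int ?q = s mod int ?L" using L by simp
      have "int ((?q + t) mod ?L) = (int ?q + int t) mod int ?L" by (metis of_nat_add of_nat_mod)
      also have "\<dots> = (s + int t) mod int ?L" unfolding q' by (simp add: mod_add_left_eq)
      finally show ?thesis .
    qed
    then have e: "nat ((s + int t) mod int ?L) = (?q + t) mod ?L" by (metis nat_int)
    ultimately show "window (pt P) s l ! t = pow (l div ?L + 2) P ! (?q + t)"
      using t by (simp add: pt_def e)
  qed
qed

lemma sub_pow_window:
  assumes "P \<noteq> []" "sub w (pow c P)"
  shows "\<exists>s. w = window (pt P) s (length w)"
proof -
  from assms(2) obtain p where p: "p + length w \<le> c * length P" "\<forall>t<length w. w!t = pow c P ! (p+t)"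
    unfolding sub_def by auto
  show ?thesis
  proof (rule exI[of _ "int p"], rule nth_equalityI)
    fix t assume "t < length w"
    then have "w ! t = P ! ((p+t) mod length P)" using p nth_pow[of "p+t" c P] by auto
    moreover have "nat ((int p + int t) mod int (length P)) = (p+t) mod length P"
      by (simp add: nat_mod_as_int)
    ultimately show "w ! t = window (pt P) (int p) (length w) ! t"
      using \<open>t < length w\<close> by (simp add: pt_def)
  qed simp
qed

lemma pt_period: "P \<noteq> [] \<Longrightarrow> pt P (t + int (length P) * k) = pt P t"
  by (simp add: pt_def)

lemma shift_pt_mod: "P \<noteq> [] \<Longrightarrow> shift_pow t (pt P) = shift_pow (t mod int (length P)) (pt P)"
proof -
  assume "P \<noteq> []"
  have "pt P (k + t) = pt P (k + t mod int (length P))" for k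
    unfolding pt_def by (metis mod_add_right_eq)
  then show ?thesis by (auto simp: shift_pow_def)
qed

lemma pt_range_finite:
  assumes "P \<noteq> []"
  shows "finite (range (\<lambda>t. shift_pow t (pt P)))"
proof -
  have "range (\<lambda>t. shift_pow t (pt P)) \<subseteq> (\<lambda>t. shift_pow t (pt P)) ` {0..<int (length P)}"
  proof
    fix y assume "y \<in> range (\<lambda>t. shift_pow t (pt P))"
    then obtain t where "y = shift_pow t (pt P)" by auto
    then have "y = shift_pow (t mod int (length P)) (pt P)" using shift_pt_mod[OF assms] by simp
    moreover have "t mod int (length P) \<in> {0..<int (length P)}" using assms by simp
    ultimately show "y \<in> (\<lambda>t. shift_pow t (pt P)) ` {0..<int (length P)}" by blast
  qed
  then show ?thesis by (rule finite_subset) auto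
qed

lemma pt_in_full: "P \<noteq> [] \<Longrightarrow> set P \<subseteq> {1..n} \<Longrightarrow> pt P \<in> full_shift n"
proof -
  assume a: "P \<noteq> []" "set P \<subseteq> {1..n}"
  have "P ! nat (k mod int (length P)) \<in> set P" for k
    using a(1) by (intro nth_mem) (simp add: nat_less_iff)
  then show ?thesis using a(2) unfolding full_shift_def pt_def by blast
qed


section \<open>The hierarchical words\<close>

fun Pw :: "nat list \<Rightarrow> nat list \<Rightarrow> nat \<Rightarrow> nat list" where
"Pw a b 0 = a" | "Pw a b (Suc 0) = a @ b" |
"Pw a b (Suc (Suc k)) = Pw a b (Suc k) @ concat (map (\<lambda>i. pow (k+2) (Pw a b i) @ Pw a b (Suc k)) [0..<k+2])"

lemma sub_concat_map: "x \<in> set xs \<Longrightarrow> sub (f x) (concat (map f xs))"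
proof (induction xs)
  case Nil then show ?case by simp
next
  case (Cons y xs)
  then show ?case by (auto intro: sub_appendL sub_app1)
qed

lemma Pw_step: "\<exists>r. Pw a b (Suc j) = Pw a b j @ r"
  by (cases j) auto

lemma Pw_prefix: "i \<le> j \<Longrightarrow> \<exists>r. Pw a b j = Pw a b i @ r"
proof (induction j)
  case 0 then show ?case by simp
next
  case (Suc j)
  show ?case
  proof (cases "i = Suc j")
    case True then show ?thesis by simp
  next
    case False
    then have "i \<le> j" using Suc.prems by simp
    then obtain r where "Pw a b j = Pw a b i @ r" using Suc.IH by blast
    moreover obtain r' where "Pw a b (Suc j) = Pw a b j @ r'" using Pw_step by blast
    ultimately show ?thesis by auto
  qed
qed

lemma Pw_sub: "i \<le> j \<Longrightarrow> sub (Pw a b i) (Pw a b j)"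
  using Pw_prefix[of i j a b] by (auto intro: sub_app1)

lemma Pw_nonempty: "a \<noteq> [] \<Longrightarrow> Pw a b j \<noteq> []"
  using Pw_prefix[of 0 j a b] by auto

lemma Pw_set: "set (Pw a b j) \<subseteq> set a \<union> set b"
proof (induction j rule: less_induct)
  case (less j)
  show ?case
  proof (cases j)
    case 0 then show ?thesis by simp
  next
    case (Suc j')
    show ?thesis
    proof (cases j')
      case 0 then show ?thesis using Suc by simp
    next
      case (Suc k)
      have "set (pow (k+2) (Pw a b i)) \<subseteq> set a \<union> set b" if "i < k+2" for i
        using pow_set[of "k+2" "Pw a b i"] less.IH[of i] that \<open>j = Suc j'\<close> Suc by simp
      moreover have "set (Pw a b (Suc k)) \<subseteq> set a \<union> set b"
        using less.IH \<open>j = Suc j'\<close> Suc by simp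
      ultimately have "\<forall>i\<in>set [0..<k+2]. set (pow (k+2) (Pw a b i) @ Pw a b (Suc k)) \<subseteq> set a \<union> set b"
        by auto
      then have "set (concat (map (\<lambda>i. pow (k+2) (Pw a b i) @ Pw a b (Suc k)) [0..<k+2])) \<subseteq> set a \<union> set b"
        by (simp only: set_concat set_map) blast
      then show ?thesis using \<open>j = Suc j'\<close> Suc \<open>set (Pw a b (Suc k)) \<subseteq> set a \<union> set b\<close> by simp
    qed
  qed
qed

lemma pow_in_Pw: "i \<le> k \<Longrightarrow> c \<le> Suc k \<Longrightarrow> 1 \<le> k \<Longrightarrow> sub (pow c (Pw a b i)) (Pw a b (Suc k))"
proof -
  assume h: "i \<le> k" "c \<le> Suc k" "1 \<le> k"
  then obtain k' where k: "k = Suc k'" by (cases k) auto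
  let ?f = "\<lambda>i. pow (k'+2) (Pw a b i) @ Pw a b (Suc k')"
  have "i \<in> set [0..<k'+2]" using h k by auto
  then have "sub (?f i) (concat (map ?f [0..<k'+2]))" by (rule sub_concat_map)
  then have "sub (?f i) (Pw a b (Suc k))" using k by (auto intro: sub_appendL)
  moreover have "sub (pow c (Pw a b i)) (?f i)"
    using h k by (auto intro!: sub_appendR sub_pow_mono)
  ultimately show ?thesis by (blast intro: sub_trans)
qed

lemma pow_in_some_Pw: "\<exists>K. sub (pow c (Pw a b i)) (Pw a b K)"
proof -
  have "sub (pow c (Pw a b i)) (Pw a b (Suc (max c (max i 1))))" by (rule pow_in_Pw) auto
  then show ?thesis by blast
qed

lemma apowb_in_Pw: "sub (pow c a @ b) (Pw a b (Suc (Suc c)))"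
proof -
  let ?f = "\<lambda>i. pow (c+2) (Pw a b i) @ Pw a b (Suc c)"
  have S: "sub (?f 0) (Pw a b (Suc (Suc c)))"
    using sub_concat_map[of 0 "[0..<c+2]" ?f] by (auto intro: sub_appendL)
  obtain r where r: "Pw a b (Suc c) = a @ b @ r"
    using Pw_prefix[of 1 "Suc c" a b] by auto
  have e: "pow (Suc (Suc c)) a = pow 2 a @ pow c a" using pow_add[of 2 c a] by simp
  have e': "pow c a @ a @ z = a @ pow c a @ z" for z
    using pow_Suc[of c a] pow_Suc2[of c a] by (metis append.assoc)
  have B: "?f 0 = (pow 2 a @ a) @ (pow c a @ b) @ r"
    by (simp add: e r e')
  have A: "sub (pow c a @ b) ((pow 2 a @ a) @ (pow c a @ b) @ r)" by (intro sub_appendL sub_app1)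
  from A B have "sub (pow c a @ b) (?f 0)" by simp
  then show ?thesis using S by (blast intro: sub_trans)
qed

section \<open>Structure of words avoiding a level block\<close>

inductive_set good :: "nat list \<Rightarrow> nat list \<Rightarrow> nat \<Rightarrow> nat list set" for a b K where
  g0: "Pw a b K \<in> good a b K"
| g1: "g \<in> good a b K \<Longrightarrow> i < K \<Longrightarrow> Pw a b K @ pow c (Pw a b i) @ g \<in> good a b K"

lemma good_prefix: "g \<in> good a b K \<Longrightarrow> \<exists>r. g = Pw a b K @ r"
  by (induction rule: good.induct) auto

lemma good_app: "g1 \<in> good a b K \<Longrightarrow> g2 \<in> good a b K \<Longrightarrow> i < K \<Longrightarrow> g1 @ pow c (Pw a b i) @ g2 \<in> good a b K"
proof (induction rule: good.induct)
  case g0 then show ?case by (rule good.g1)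
next
  case (g1 g i' c')
  then have "g @ pow c (Pw a b i) @ g2 \<in> good a b K" by blast
  then have "Pw a b K @ pow c' (Pw a b i') @ (g @ pow c (Pw a b i) @ g2) \<in> good a b K"
    using g1 by (intro good.g1) auto
  then show ?case by simp
qed

lemma good_app0: "0 < K \<Longrightarrow> g1 \<in> good a b K \<Longrightarrow> g2 \<in> good a b K \<Longrightarrow> g1 @ g2 \<in> good a b K"
  using good_app[of g1 a b K g2 0 0] by simp

lemma good_pow: "0 < K \<Longrightarrow> g \<in> good a b K \<Longrightarrow> pow (Suc c) g \<in> good a b K"
proof (induction c)
  case 0 then show ?case by (simp add: pow_Suc)
next
  case (Suc c) then show ?case by (simp add: pow_Suc[of "Suc c"] good_app0)
qed

lemma good_fold:
  assumes "g \<in> good a b K" "\<And>i h. i \<in> set xs \<Longrightarrow> h \<in> good a b K \<Longrightarrow> h @ f i \<in> good a b K"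
  shows "g @ concat (map f xs) \<in> good a b K"
  using assms
proof (induction xs arbitrary: g)
  case Nil then show ?case by simp
next
  case (Cons i xs)
  have "g @ f i \<in> good a b K" using Cons.prems by auto
  then have "(g @ f i) @ concat (map f xs) \<in> good a b K"
    using Cons.prems by (intro Cons.IH) auto
  then show ?case by simp
qed

lemma Pw_good: "0 < K \<Longrightarrow> K \<le> j \<Longrightarrow> Pw a b j \<in> good a b K"
proof (induction j rule: less_induct)
  case (less j)
  show ?case
  proof (cases "j = K")
    case True then show ?thesis by (simp add: good.g0)
  next
    case False
    with less.prems obtain k where j: "j = Suc (Suc k)" and kK: "K \<le> Suc k"
      by (cases j; cases "j - 1") auto
    have base: "Pw a b (Suc k) \<in> good a b K" using less.IH j kK less.prems by auto
    have "Pw a b (Suc k) @ concat (map (\<lambda>i. pow (k+2) (Pw a b i) @ Pw a b (Suc k)) [0..<k+2]) \<in> good a b K"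
    proof (rule good_fold[OF base])
      fix i h assume i: "i \<in> set [0..<k+2]" and h: "h \<in> good a b K"
      show "h @ pow (k+2) (Pw a b i) @ Pw a b (Suc k) \<in> good a b K"
      proof (cases "i < K")
        case True then show ?thesis using good_app[OF h base] by blast
      next
        case False
        then have "Pw a b i \<in> good a b K" using less.IH i j less.prems by auto
        then have "pow (k+2) (Pw a b i) \<in> good a b K" using good_pow less.prems by auto
        then have "h @ pow (k+2) (Pw a b i) \<in> good a b K" using good_app0 h less.prems by blast
        then have "(h @ pow (k+2) (Pw a b i)) @ Pw a b (Suc k) \<in> good a b K"
          using good_app0 base less.prems by blast
        then show ?thesis by simp
      qed
    qed
    then show ?thesis using j by simp
  qed
qed

lemma split_sub:
  assumes "sub w (X @ G @ Y)" "\<not> sub G w" "G \<noteq> []"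
  shows "sub w (X @ butlast G) \<or> sub w (tl G @ Y)"
proof -
  from assms(1) obtain p where p: "p + length w \<le> length (X @ G @ Y)"
    "\<forall>t<length w. w!t = (X @ G @ Y)!(p+t)" unfolding sub_def by auto
  have lG: "length G > 0" using assms(3) by simp
  consider "p + length w < length X + length G" | "p > length X" |
    "p \<le> length X" "p + length w \<ge> length X + length G" by linarith
  then show ?thesis
  proof cases
    case 1
    have "sub w (X @ butlast G)" unfolding sub_def
    proof (rule exI[of _ p], intro conjI allI impI)
      show "p + length w \<le> length (X @ butlast G)" using 1 by simp
      fix t assume t: "t < length w"
      have "(X @ G @ Y) ! (p+t) = (X @ butlast G) ! (p+t)"
        using 1 t by (auto simp: nth_append nth_butlast)
      then show "w ! t = (X @ butlast G) ! (p + t)" using p t by simp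
    qed
    then show ?thesis ..
  next
    case 2
    have "sub w (tl G @ Y)" unfolding sub_def
    proof (rule exI[of _ "p - length X - 1"], intro conjI allI impI)
      show "p - length X - 1 + length w \<le> length (tl G @ Y)" using 2 p(1) by simp
      fix t assume t: "t < length w"
      have e1: "(X @ G @ Y) ! (p+t) = (G @ Y) ! (p + t - length X)"
        using 2 by (simp add: nth_append)
      have e2: "G @ Y = hd G # (tl G @ Y)" using assms(3) by simp
      have e3: "p + t - length X = Suc (p - length X - 1 + t)" using 2 by simp
      have "(X @ G @ Y) ! (p+t) = (tl G @ Y) ! (p - length X - 1 + t)"
        unfolding e1 e3 by (subst e2) simp
      then show "w ! t = (tl G @ Y) ! (p - length X - 1 + t)" using p t by simp
    qed
    then show ?thesis ..
  next
    case 3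
    have "sub G w" unfolding sub_def
    proof (rule exI[of _ "length X - p"], intro conjI allI impI)
      show "length X - p + length G \<le> length w" using 3 by simp
      fix t assume t: "t < length G"
      have "w ! (length X - p + t) = (X @ G @ Y) ! (p + (length X - p + t))"
        using p 3 t by simp
      also have "\<dots> = G ! t" using 3 t by (simp add: nth_append)
      finally show "G ! t = w ! (length X - p + t)" by simp
    qed
    with assms(2) show ?thesis by simp
  qed
qed

lemma good_avoid:
  assumes "g \<in> good a b K" "sub w g" "\<not> sub (Pw a b K) w" "0 < K" "a \<noteq> []"
  shows "\<exists>i<K. \<exists>c. sub w (Pw a b K @ pow c (Pw a b i) @ Pw a b K)"
  using assms
proof (induction rule: good.induct)
  case g0
  then show ?case by (intro exI[of _ 0]) (auto intro: sub_appendR)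
next
  case (g1 g i c)
  let ?G = "Pw a b K"
  have G: "?G \<noteq> []" using g1.prems Pw_nonempty by auto
  obtain r where r: "g = ?G @ r" using good_prefix[OF g1.hyps(1)] by blast
  have "sub w ((?G @ pow c (Pw a b i)) @ ?G @ r)" using g1.prems r by simp
  then have "sub w ((?G @ pow c (Pw a b i)) @ butlast ?G) \<or> sub w (tl ?G @ r)"
    using split_sub g1.prems G by blast
  then show ?case
  proof
    assume h: "sub w ((?G @ pow c (Pw a b i)) @ butlast ?G)"
    have "((?G @ pow c (Pw a b i)) @ butlast ?G) @ [last ?G] = ?G @ pow c (Pw a b i) @ ?G"
      using append_butlast_last_id[OF G] by simp
    then have "sub ((?G @ pow c (Pw a b i)) @ butlast ?G) (?G @ pow c (Pw a b i) @ ?G)"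
      by (metis sub_app1)
    then show ?thesis using h g1.hyps(2) by (blast intro: sub_trans)
  next
    assume h: "sub w (tl ?G @ r)"
    have "g = [hd ?G] @ (tl ?G @ r)" using r G by simp
    then have "sub (tl ?G @ r) g" by (metis sub_app2)
    have "sub w g" using h \<open>sub (tl ?G @ r) g\<close> by (rule sub_trans)
    then show ?thesis using g1.IH g1.prems by blast
  qed
qed


section \<open>The subshift built from the words\<close>

definition LX :: "nat list \<Rightarrow> nat list \<Rightarrow> nat list set" where
  "LX a b = {w. \<exists>K. sub w (Pw a b K)}"

definition XS :: "nat \<Rightarrow> nat list \<Rightarrow> nat list \<Rightarrow> config set" where
  "XS n a b = {x \<in> full_shift n. \<forall>i l. window x i l \<in> LX a b}"

lemma LX_sub: "sub w v \<Longrightarrow> v \<in> LX a b \<Longrightarrow> w \<in> LX a b"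
  unfolding LX_def by (blast intro: sub_trans)

lemma LX_common: "w \<in> LX a b \<Longrightarrow> v \<in> LX a b \<Longrightarrow> \<exists>K. sub w (Pw a b K) \<and> sub v (Pw a b K)"
proof -
  assume "w \<in> LX a b" "v \<in> LX a b"
  then obtain K1 K2 where "sub w (Pw a b K1)" "sub v (Pw a b K2)" unfolding LX_def by blast
  then show ?thesis using Pw_sub[of K1 "max K1 K2" a b] Pw_sub[of K2 "max K1 K2" a b]
    by (intro exI[of _ "max K1 K2"]) (auto intro: sub_trans)
qed

lemma LX_mono: "w \<in> LX a b \<Longrightarrow> \<exists>K\<ge>K0. sub w (Pw a b K)"
proof -
  assume "w \<in> LX a b"
  then obtain K1 where "sub w (Pw a b K1)" unfolding LX_def by blast
  then show ?thesis using Pw_sub[of K1 "max K1 K0" a b]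
    by (intro exI[of _ "max K1 K0"]) (auto intro: sub_trans)
qed

lemma sub_Pw_window: "a \<noteq> [] \<Longrightarrow> sub w (Pw a b K) \<Longrightarrow> \<exists>s. w = window (pt (Pw a b K)) s (length w)"
  by (rule sub_pow_window[of _ _ 1]) (auto simp: Pw_nonempty pow_def)

lemma sub_window_window: "sub w (window y i l) \<Longrightarrow> \<exists>i'. w = window y i' (length w)"
  unfolding sub_def
  apply clarify
  subgoal for p by (rule exI[of _ "i + int p"]) (auto intro!: nth_equalityI simp: add_ac)
  done

lemma window_take_drop: "p + l \<le> L \<Longrightarrow> take l (drop p (window y i L)) = window y (i + int p) l"
  by (auto intro!: nth_equalityI simp: add_ac)

locale constr =
  fixes n :: nat and a b :: "nat list"
  assumes a_ne: "a \<noteq> []" and b_ne: "b \<noteq> []"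
    and ab_set: "set a \<union> set b \<subseteq> {1..n}"
    and diverge: "\<exists>q. q < length a \<and> q < length b \<and> a!q \<noteq> b!q"
begin

abbreviation "P K \<equiv> Pw a b K"
abbreviation "X \<equiv> XS n a b"

lemma P_ne: "P K \<noteq> []" using Pw_nonempty a_ne by auto

lemma pt_in_X: "pt (P K) \<in> X"
  unfolding XS_def
proof (intro CollectI conjI allI)
  show "pt (P K) \<in> full_shift n"
    using pt_in_full[OF P_ne] Pw_set[of a b K] ab_set by blast
  fix i l
  have "sub (window (pt (P K)) i l) (pow (l div length (P K) + 2) (P K))"
    by (rule window_pt_pow[OF P_ne])
  moreover obtain K' where "sub (pow (l div length (P K) + 2) (P K)) (P K')"
    using pow_in_some_Pw by blast
  ultimately show "window (pt (P K)) i l \<in> LX a b" unfolding LX_def by (blast intro: sub_trans)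
qed

lemma X_shift: "x \<in> X \<Longrightarrow> shift_pow j x \<in> X"
  unfolding XS_def full_shift_def by (auto simp: window_shift_pow shift_pow_apply)

lemma X_subshift: "subshift n X"
  unfolding subshift_def closed_in_shift_def
proof (intro conjI ballI impI)
  show "X \<subseteq> full_shift n" unfolding XS_def by auto
next
  fix x assume x: "x \<in> full_shift n" and cl: "\<forall>e>0. \<exists>y\<in>X. sdist x y < e"
  show "x \<in> X" unfolding XS_def
  proof (intro CollectI conjI allI x)
    fix i l
    let ?r = "nat \<bar>i\<bar> + l"
    obtain y where y: "y \<in> X" "sdist x y < (1/2)^?r" using cl by force
    have "window x i l = window y i l"
      by (rule nth_equalityI) (auto intro!: sdist_small[OF y(2)])
    then show "window x i l \<in> LX a b" using y(1) unfolding XS_def by auto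
  qed
next
  show "shift ` X = X"
  proof
    show "shift ` X \<subseteq> X" using X_shift by (auto simp: shift_eq)
    show "X \<subseteq> shift ` X"
    proof
      fix x assume "x \<in> X"
      then have "shift_pow (-1) x \<in> X" by (rule X_shift)
      moreover have "x = shift (shift_pow (-1) x)" by (simp add: shift_eq shift_pow_add)
      ultimately show "x \<in> shift ` X" by blast
    qed
  qed
qed

lemma word_point:
  assumes "w \<in> LX a b"
  shows "\<exists>K s. w = window (pt (P K)) s (length w)"
  using assms sub_Pw_window[OF a_ne] unfolding LX_def by blast

lemma approx_by_pt:
  assumes "x \<in> X"
  shows "\<exists>K s. window (shift_pow s (pt (P K))) (- int r) (2*r+1) = window x (- int r) (2*r+1)"
proof -
  have "window x (- int r) (2*r+1) \<in> LX a b" using assms unfolding XS_def by blast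
  then obtain K s where "window x (- int r) (2*r+1) = window (pt (P K)) s (2*r+1)"
    using word_point by fastforce
  then show ?thesis
    by (intro exI[of _ K] exI[of _ "s + int r"]) (simp add: window_shift_pow)
qed

lemma approx_by_pt_common:
  assumes "x \<in> X" "y \<in> X"
  shows "\<exists>K s s'. window (shift_pow s (pt (P K))) (- int r) (2*r+1) = window x (- int r) (2*r+1) \<and>
    window (shift_pow s' (pt (P K))) (- int r') (2*r'+1) = window y (- int r') (2*r'+1)"
proof -
  have "window x (- int r) (2*r+1) \<in> LX a b" using assms(1) unfolding XS_def by blast
  moreover have "window y (- int r') (2*r'+1) \<in> LX a b" using assms(2) unfolding XS_def by blast
  ultimately obtain K where K: "sub (window x (- int r) (2*r+1)) (P K)" "sub (window y (- int r') (2*r'+1)) (P K)"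
    using LX_common by blast
  obtain s where s: "window x (- int r) (2*r+1) = window (pt (P K)) s (2*r+1)"
    using sub_Pw_window[OF a_ne K(1)] by fastforce
  obtain s' where s': "window y (- int r') (2*r'+1) = window (pt (P K)) s' (2*r'+1)"
    using sub_Pw_window[OF a_ne K(2)] by fastforce
  show ?thesis
    apply (rule exI[of _ K], rule exI[of _ "s + int r"], rule exI[of _ "s' + int r'"])
    unfolding window_shift_pow using s s' by simp
qed

lemma X_transitive: "transitive_pow X 1"
  unfolding transitive_pow_def
proof (intro allI impI)
  fix U V assume h: "open_in_X X U \<and> open_in_X X V \<and> U \<noteq> {} \<and> V \<noteq> {}"
  then obtain u v where uv: "u \<in> U" "v \<in> V" by blast
  have oU: "open_in_X X U" and oV: "open_in_X X V" using h by simp_all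
  have UX: "U \<subseteq> X" "V \<subseteq> X" using oU oV unfolding open_in_X_def by simp_all
  obtain r where r: "\<forall>y\<in>X. window u (- int r) (2*r+1) = window y (- int r) (2*r+1) \<longrightarrow> y \<in> U"
    using open_ball_window[OF oU uv(1)] by (elim exE)
  obtain r' where r': "\<forall>y\<in>X. window v (- int r') (2*r'+1) = window y (- int r') (2*r'+1) \<longrightarrow> y \<in> V"
    using open_ball_window[OF oV uv(2)] by (elim exE)
  have uX: "u \<in> X" and vX: "v \<in> X" using uv UX by auto
  obtain K s s' where K: "window (shift_pow s (pt (P K))) (- int r) (2*r+1) = window u (- int r) (2*r+1)"
    "window (shift_pow s' (pt (P K))) (- int r') (2*r'+1) = window v (- int r') (2*r'+1)"
    using approx_by_pt_common[OF uX vX, of r r'] by (elim exE conjE)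
  have z1X: "shift_pow s (pt (P K)) \<in> X" by (rule X_shift[OF pt_in_X])
  have z2X: "shift_pow s' (pt (P K)) \<in> X" by (rule X_shift[OF pt_in_X])
  have z1: "shift_pow s (pt (P K)) \<in> U" using r K(1)[symmetric] z1X by blast
  have z2: "shift_pow s' (pt (P K)) \<in> V" using r' K(2)[symmetric] z2X by blast
  have "shift_pow (1 * (s' - s)) (shift_pow s (pt (P K))) = shift_pow s' (pt (P K))"
    by (simp add: shift_pow_add)
  then have "shift_pow s' (pt (P K)) \<in> shift_pow (1 * (s' - s)) ` U"
    using z1 by (metis image_eqI)
  then have "shift_pow (1 * (s' - s)) ` U \<inter> V \<noteq> {}" using z2 by (simp only: disjoint_iff) blast
  then show "\<exists>j. shift_pow (1 * j) ` U \<inter> V \<noteq> {}" by (rule exI)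
qed

lemma X_dense_per: "x \<in> X \<Longrightarrow> e > 0 \<Longrightarrow> \<exists>p. periodic_point X p \<and> sdist x p < e"
proof -
  assume x: "x \<in> X" and e: "e > 0"
  obtain r where r: "(1/2::real)^r < e" using exists_small_pow[OF e] by blast
  obtain K s where K: "window (shift_pow s (pt (P K))) (- int r) (2*r+1) = window x (- int r) (2*r+1)"
    using approx_by_pt[OF x] by blast
  let ?p = "shift_pow s (pt (P K))"
  have "sdist x ?p \<le> (1/2)^(Suc r)" using K by (intro window_agree_sdist) simp
  moreover have "(1/2::real)^(Suc r) \<le> (1/2)^r" by (rule power_decreasing) auto
  ultimately have d: "sdist x ?p < e" using r by linarith
  have "range (\<lambda>j. shift_pow j ?p) \<subseteq> range (\<lambda>t. shift_pow t (pt (P K)))"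
    by (auto simp: shift_pow_add)
  then have "finite (range (\<lambda>j. shift_pow j ?p))"
    using pt_range_finite[OF P_ne] finite_subset by blast
  then have "periodic_point X ?p" unfolding periodic_point_def using X_shift pt_in_X by blast
  then show ?thesis using d by blast
qed

lemma points_apowb: "\<exists>y\<in>X. window y 0 (length (pow c a @ b)) = pow c a @ b"
proof -
  have "sub (pow c a @ b) (P (Suc (Suc c)))" by (rule apowb_in_Pw)
  then obtain s where s: "pow c a @ b = window (pt (P (Suc (Suc c)))) s (length (pow c a @ b))"
    using sub_Pw_window[OF a_ne] by blast
  have "window (shift_pow s (pt (P (Suc (Suc c))))) 0 (length (pow c a @ b)) = pow c a @ b"
    unfolding window_shift_pow add_0 using s by simp
  moreover have "shift_pow s (pt (P (Suc (Suc c)))) \<in> X" by (rule X_shift[OF pt_in_X])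
  ultimately show ?thesis by blast
qed

lemma X_infinite: "infinite X"
proof
  assume fin: "finite X"
  obtain q where q: "q < length a" "q < length b" "a!q \<noteq> b!q" using diverge by blast
  define y where "y c = (SOME y. y \<in> X \<and> window y 0 (length (pow c a @ b)) = pow c a @ b)" for c
  have y: "y c \<in> X \<and> window (y c) 0 (length (pow c a @ b)) = pow c a @ b" for c
  proof -
    have "\<exists>y. y \<in> X \<and> window y 0 (length (pow c a @ b)) = pow c a @ b" using points_apowb[of c] by blast
    then show ?thesis unfolding y_def by (rule someI_ex)
  qed
  have yval: "y c (int t) = (pow c a @ b) ! t" if "t < length (pow c a @ b)" for c t
    using y[of c] that by (metis add_0 window_nth)
  have "inj_on y {0..card X}"
  proof (rule inj_onI)
    fix c c' assume "c \<in> {0..card X}" "c' \<in> {0..card X}" and eq: "y c = y c'"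
    show "c = c'"
    proof (rule ccontr)
      assume "c \<noteq> c'"
      then consider "c < c'" | "c' < c" by linarith
      then show False
      proof cases
        case 1
        have i1: "c * length a + q < length (pow c a @ b)" using q by simp
        have lt: "c * length a + q < c' * length a"
        proof -
          have "(c+1) * length a \<le> c' * length a" using 1 by (intro mult_right_mono) auto
          then show ?thesis using q by simp
        qed
        then have i2: "c * length a + q < length (pow c' a @ b)" by simp
        have "(pow c a @ b) ! (c * length a + q) = b ! q" by (simp add: nth_append)
        moreover have "(pow c' a @ b) ! (c * length a + q) = a ! q"
          using lt q by (simp add: nth_append nth_pow)
        ultimately show False using yval[OF i1] yval[OF i2] eq q(3) by simp
      next
        case 2
        have i1: "c' * length a + q < length (pow c' a @ b)" using q by simp
        have lt: "c' * length a + q < c * length a"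
        proof -
          have "(c'+1) * length a \<le> c * length a" using 2 by (intro mult_right_mono) auto
          then show ?thesis using q by simp
        qed
        then have i2: "c' * length a + q < length (pow c a @ b)" by simp
        have "(pow c' a @ b) ! (c' * length a + q) = b ! q" by (simp add: nth_append)
        moreover have "(pow c a @ b) ! (c' * length a + q) = a ! q"
          using lt q by (simp add: nth_append nth_pow)
        ultimately show False using yval[OF i1] yval[OF i2] eq q(3) by simp
      qed
    qed
  qed
  moreover have "y ` {0..card X} \<subseteq> X" using y by auto
  ultimately have "card {0..card X} \<le> card X" using fin by (rule card_inj_on_le)
  then show False by simp
qed

end

lemma periodic_finite:
  assumes "j \<noteq> 0"
  shows "finite {x \<in> full_shift n. shift_pow j x = x}"
proof -
  let ?m = "nat \<bar>j\<bar>"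
  have per: "x (k + j * m) = x k" if "shift_pow j x = x" for x k m
  proof -
    have s1: "x (k + j) = x k" for k using that by (metis shift_pow_apply)
    have "x (k + j * int m') = x k \<and> x (k - j * int m') = x k" for k m'
    proof (induction m' arbitrary: k)
      case 0 then show ?case by simp
    next
      case (Suc m')
      have e1: "k + j * int (Suc m') = (k + j * int m') + j" by (simp add: algebra_simps)
      have A: "x (k + j * int (Suc m')) = x k" unfolding e1 s1 using Suc.IH by blast
      have e2: "(k - j * int (Suc m')) + j = k - j * int m'" by (simp add: algebra_simps)
      have "x (k - j * int (Suc m')) = x ((k - j * int (Suc m')) + j)" using s1 by metis
      also have "\<dots> = x k" unfolding e2 using Suc.IH by blast
      finally show ?case using A by blast
    qed
    then show ?thesis by (cases m rule: int_cases2) (auto simp: algebra_simps)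
  qed
  have "inj_on (\<lambda>x. window x 0 ?m) {x \<in> full_shift n. shift_pow j x = x}"
  proof (rule inj_onI)
    fix x y assume x: "x \<in> {x \<in> full_shift n. shift_pow j x = x}" and y: "y \<in> {x \<in> full_shift n. shift_pow j x = x}"
      and eq: "window x 0 ?m = window y 0 ?m"
    show "x = y"
    proof
      fix k
      have m0: "0 < \<bar>j\<bar>" using assms by simp
      obtain d where d: "k = k mod \<bar>j\<bar> + \<bar>j\<bar> * d" by (metis add.commute mult_div_mod_eq)
      obtain d' where e: "\<bar>j\<bar> * d = j * d'"
      proof (cases "j \<ge> 0")
        case True then show ?thesis using that[of d] by simp
      next
        case False then show ?thesis using that[of "-d"] by simp
      qed
      have dk: "k = k mod \<bar>j\<bar> + j * d'" using d unfolding e .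
      have r: "nat (k mod \<bar>j\<bar>) < ?m" using m0 by simp
      have "x (0 + int (nat (k mod \<bar>j\<bar>))) = y (0 + int (nat (k mod \<bar>j\<bar>)))"
        using eq r unfolding window_eq_iff by blast
      moreover have "int (nat (k mod \<bar>j\<bar>)) = k mod \<bar>j\<bar>" using m0 by simp
      ultimately have xy: "x (k mod \<bar>j\<bar>) = y (k mod \<bar>j\<bar>)" by simp
      have px: "shift_pow j x = x" and py: "shift_pow j y = y" using x y by auto
      have "x k = x (k mod \<bar>j\<bar> + j * d')" by (rule arg_cong[where f=x, OF dk])
      also have "\<dots> = x (k mod \<bar>j\<bar>)" by (rule per[OF px])
      also have "\<dots> = y (k mod \<bar>j\<bar>)" by (rule xy)
      also have "\<dots> = y (k mod \<bar>j\<bar> + j * d')" by (rule per[OF py, symmetric])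
      also have "\<dots> = y k" by (rule arg_cong[where f=y, OF dk[symmetric]])
      finally show "x k = y k" .
    qed
  qed
  moreover have "(\<lambda>x. window x 0 ?m) ` {x \<in> full_shift n. shift_pow j x = x} \<subseteq> {xs. set xs \<subseteq> {1..n} \<and> length xs = ?m}"
    unfolding full_shift_def window_def by auto
  ultimately show ?thesis
    using finite_lists_length_eq[of "{1..n}" ?m] inj_on_finite by blast
qed


lemma sub_middle:
  assumes "sub w (G @ Z @ G)" "2 * length G \<le> length w"
  shows "sub (take (length w - 2 * length G) (drop (length G) w)) Z"
proof -
  from assms(1) obtain p where p: "p + length w \<le> length (G @ Z @ G)"
    "\<forall>t<length w. w!t = (G @ Z @ G)!(p+t)" unfolding sub_def by blast
  show ?thesis unfolding sub_def
  proof (rule exI[of _ p], intro conjI allI impI)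
    show "p + length (take (length w - 2 * length G) (drop (length G) w)) \<le> length Z"
      using p(1) assms(2) by simp
    fix t assume t: "t < length (take (length w - 2 * length G) (drop (length G) w))"
    then have t': "t < length w - 2 * length G" by simp
    have "take (length w - 2 * length G) (drop (length G) w) ! t = w ! (length G + t)"
      using t' by simp
    also have "\<dots> = (G @ Z @ G) ! (p + (length G + t))" using p(2) t' by simp
    also have "\<dots> = (Z @ G) ! (p + t)" by (simp add: nth_append)
    also have "\<dots> = Z ! (p + t)"
    proof -
      have "p + t < length Z" using t' p(1) assms(2) by simp
      then show ?thesis by (simp add: nth_append)
    qed
    finally show "take (length w - 2 * length G) (drop (length G) w) ! t = Z ! (p + t)" .
  qed
qed

context constr
begin

lemma avoid_local:
  assumes K: "0 < K" and y: "y \<in> X" and av: "\<forall>i l. \<not> sub (P K) (window y i l)"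
  shows "\<exists>i<K. \<exists>\<phi>. 0 \<le> \<phi> \<and> \<phi> < int (length (P i)) \<and>
           (\<forall>u. \<bar>u\<bar> \<le> int R \<longrightarrow> y u = shift_pow \<phi> (pt (P i)) u)"
proof -
  let ?g = "length (P K)"
  let ?R2 = "R + ?g"
  let ?w = "window y (- int ?R2) (2 * ?R2 + 1)"
  have "?w \<in> LX a b" using y unfolding XS_def by blast
  then obtain J where J: "J \<ge> K" "sub ?w (P J)" using LX_mono by blast
  have "P J \<in> good a b K" using Pw_good K J(1) by blast
  moreover have "\<not> sub (P K) ?w" using av by blast
  ultimately obtain i c where ic: "i < K" "sub ?w (P K @ pow c (P i) @ P K)"
    using good_avoid[of "P J" a b K ?w] J(2) K a_ne by blast
  have "sub (take (length ?w - 2 * ?g) (drop ?g ?w)) (pow c (P i))"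
    by (rule sub_middle[OF ic(2)]) simp
  moreover have "take (length ?w - 2 * ?g) (drop ?g ?w) = window y (- int R) (2 * R + 1)"
  proof -
    have "take (2 * R + 1) (drop ?g ?w) = window y (- int ?R2 + int ?g) (2 * R + 1)"
      by (rule window_take_drop) simp
    moreover have "length ?w - 2 * ?g = 2 * R + 1" by simp
    moreover have "- int ?R2 + int ?g = - int R" by simp
    ultimately show ?thesis by simp
  qed
  ultimately have "sub (window y (- int R) (2 * R + 1)) (pow c (P i))" by simp
  then obtain s where s: "window y (- int R) (2 * R + 1) = window (pt (P i)) s (2 * R + 1)"
    using sub_pow_window[OF P_ne] by fastforce
  let ?L = "int (length (P i))"
  let ?\<phi> = "(s + int R) mod ?L"
  have L: "?L > 0" using P_ne by simp
  have agree: "y u = shift_pow ?\<phi> (pt (P i)) u" if u: "\<bar>u\<bar> \<le> int R" for u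
  proof -
    have t: "nat (u + int R) < 2 * R + 1" using u by linarith
    have "y (- int R + int (nat (u + int R))) = pt (P i) (s + int (nat (u + int R)))"
      using s t unfolding window_eq_iff by blast
    moreover have "int (nat (u + int R)) = u + int R" using u by linarith
    ultimately have "y u = pt (P i) (u + (s + int R))" by (simp add: add_ac)
    also have "\<dots> = shift_pow (s + int R) (pt (P i)) u" by (simp add: shift_pow_apply)
    also have "shift_pow (s + int R) (pt (P i)) = shift_pow ?\<phi> (pt (P i))"
      by (rule shift_pt_mod[OF P_ne])
    finally show ?thesis .
  qed
  show ?thesis
    by (rule exI[of _ i], rule conjI[OF ic(1)], rule exI[of _ ?\<phi>]) (use L agree in simp)
qed

lemma avoid_periodic:
  assumes K: "0 < K" and y: "y \<in> X" and av: "\<forall>i l. \<not> sub (P K) (window y i l)"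
  shows "\<exists>i<K. \<exists>\<phi>. y = shift_pow \<phi> (pt (P i))"
proof (rule ccontr)
  assume nc: "\<not> ?thesis"
  let ?Phi = "Sigma {..<K} (\<lambda>i. {0..<int (length (P i))})"
  let ?Q = "\<lambda>p. shift_pow (snd p) (pt (P (fst p)))"
  have fin: "finite ?Phi" by (intro finite_SigmaI) auto
  have "\<forall>p\<in>?Phi. \<exists>u. y u \<noteq> ?Q p u"
  proof
    fix p assume "p \<in> ?Phi"
    then have "y \<noteq> ?Q p" using nc by (cases p) auto
    then show "\<exists>u. y u \<noteq> ?Q p u" by blast
  qed
  then obtain bad where bad: "\<And>p. p \<in> ?Phi \<Longrightarrow> y (bad p) \<noteq> ?Q p (bad p)" by metis
  let ?M = "Max ((\<lambda>p. nat \<bar>bad p\<bar>) ` ?Phi)"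
  obtain i \<phi> where i: "i < K" "0 \<le> \<phi>" "\<phi> < int (length (P i))"
    and ag: "\<forall>u. \<bar>u\<bar> \<le> int ?M \<longrightarrow> y u = shift_pow \<phi> (pt (P i)) u"
    using avoid_local[OF K y av, of ?M] by blast
  have pPhi: "(i, \<phi>) \<in> ?Phi" using i by simp
  have "nat \<bar>bad (i, \<phi>)\<bar> \<le> ?M" using fin pPhi by (intro Max_ge) auto
  then have "\<bar>bad (i, \<phi>)\<bar> \<le> int ?M" by linarith
  then have "y (bad (i, \<phi>)) = ?Q (i, \<phi>) (bad (i, \<phi>))" using ag by simp
  with bad[OF pPhi] show False by blast
qed

lemma X_faithful: "faithful X"
  unfolding faithful_def
proof (intro allI impI)
  fix j assume h: "\<forall>x\<in>X. shift_pow j x = x"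
  show "j = 0"
  proof (rule ccontr)
    assume "j \<noteq> 0"
    then have "finite {x \<in> full_shift n. shift_pow j x = x}" by (rule periodic_finite)
    moreover have "X \<subseteq> {x \<in> full_shift n. shift_pow j x = x}" using h unfolding XS_def by blast
    ultimately have "finite X" by (rule finite_subset[rotated])
    with X_infinite show False by blast
  qed
qed

lemma X_almost_minimal:
  assumes Y: "Y \<subseteq> X" "Y \<noteq> X" "\<forall>x\<in>X. (\<forall>e>0. \<exists>y\<in>Y. sdist x y < e) \<longrightarrow> x \<in> Y"
    "shift ` Y = Y"
  shows "finite Y"
proof (rule ccontr)
  assume inf: "infinite Y"
  have "X \<subseteq> Y"
  proof
    fix x assume x: "x \<in> X"
    have "\<forall>e>0. \<exists>y\<in>Y. sdist x y < e"
    proof (intro allI impI)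
      fix e :: real assume e: "e > 0"
      obtain r where r: "(1/2::real)^r < e" using exists_small_pow[OF e] by blast
      let ?u = "window x (- int r) (2*r+1)"
      have "?u \<in> LX a b" using x unfolding XS_def by blast
      then obtain K where K: "K \<ge> 1" "sub ?u (P K)" using LX_mono by blast
      let ?E = "\<Union>i\<in>{..<K}. range (\<lambda>\<phi>. shift_pow \<phi> (pt (P i)))"
      have finE: "finite ?E" using pt_range_finite[OF P_ne] by blast
      have "\<not> Y \<subseteq> ?E" using inf finE finite_subset by blast
      then obtain y where yY: "y \<in> Y" and yE: "y \<notin> ?E" by blast
      have yX: "y \<in> X" using yY Y(1) by blast
      have "\<exists>i l. sub (P K) (window y i l)"
      proof (rule ccontr)
        assume "\<not> (\<exists>i l. sub (P K) (window y i l))"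
        then have "\<exists>i<K. \<exists>\<phi>. y = shift_pow \<phi> (pt (P i))"
          using avoid_periodic[of K y] K(1) yX by auto
        then show False using yE by blast
      qed
      then obtain i l where "sub (P K) (window y i l)" by blast
      then have "sub ?u (window y i l)" using K(2) sub_trans by blast
      then obtain i' where i': "?u = window y i' (2*r+1)" using sub_window_window by fastforce
      let ?z = "shift_pow (i' + int r) y"
      have zY: "?z \<in> Y" by (rule shift_invariant_pow[OF Y(4) yY])
      have "window ?z (- int r) (2*r+1) = window y i' (2*r+1)" by (simp add: window_shift_pow)
      then have "window x (- int r) (2*r+1) = window ?z (- int r) (2*r+1)" using i' by simp
      then have "sdist x ?z \<le> (1/2)^(Suc r)" by (rule window_agree_sdist)
      moreover have "(1/2::real)^(Suc r) \<le> (1/2)^r" by (rule power_decreasing) auto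
      ultimately have "sdist x ?z < e" using r by linarith
      then show "\<exists>y\<in>Y. sdist x y < e" using zY by blast
    qed
    then show "x \<in> Y" using Y(3) x by blast
  qed
  then show False using Y(1,2) by blast
qed

lemma X_CAM: "CAM X"
  unfolding CAM_def
  using X_transitive X_faithful X_dense_per X_almost_minimal by blast

end


lemma window_append: "window x i (l1 + l2) = window x i l1 @ window x (i + int l1) l2"
  by (rule nth_equalityI) (auto simp: nth_append add_ac)

lemma take_window: "l \<le> L \<Longrightarrow> take l (window x i L) = window x i l"
  by (rule nth_equalityI) auto

lemma window_set: "x \<in> full_shift n \<Longrightarrow> set (window x i l) \<subseteq> {1..n}"
  unfolding full_shift_def window_def by auto

locale Wc =
  fixes n :: nat and W :: "config set"
  assumes W_sub: "subshift n W" and W_inf: "infinite W" and W_tt: "totally_transitive W"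
begin

lemma W_full: "W \<subseteq> full_shift n"
  using W_sub unfolding subshift_def closed_in_shift_def by blast

lemma W_shift: "w \<in> W \<Longrightarrow> shift_pow j w \<in> W"
  using W_sub shift_invariant_pow unfolding subshift_def by blast

lemma W_ne: "W \<noteq> {}" using W_inf by auto

definition LW :: "nat list set" where
  "LW = {v. \<exists>w\<in>W. \<exists>i l. v = window w i l}"

definition FN :: "nat \<Rightarrow> nat list set" where
  "FN N = {v. \<exists>w\<in>W. v = window w 0 N}"

lemma window_FN: "w \<in> W \<Longrightarrow> window w i N \<in> FN N"
  unfolding FN_def
  by (rule CollectI, rule bexI[of _ "shift_pow i w"]) (auto simp: window_shift_pow W_shift)

lemma FN_LW: "FN N \<subseteq> LW" unfolding FN_def LW_def by blast

lemma FN_length: "v \<in> FN N \<Longrightarrow> length v = N" unfolding FN_def by auto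

lemma LW_set: "v \<in> LW \<Longrightarrow> set v \<subseteq> {1..n}"
proof -
  assume "v \<in> LW"
  then obtain w i l where "w \<in> W" "v = window w i l" unfolding LW_def by blast
  then show ?thesis using window_set W_full by blast
qed

lemma LW_sub: "sub u v \<Longrightarrow> v \<in> LW \<Longrightarrow> u \<in> LW"
proof -
  assume "sub u v" "v \<in> LW"
  then obtain w i l where w: "w \<in> W" "v = window w i l" unfolding LW_def by blast
  then obtain i' where "u = window w i' (length u)" using sub_window_window \<open>sub u v\<close> by blast
  then show ?thesis using w unfolding LW_def by blast
qed

lemma FN_finite: "finite (FN N)"
proof -
  have "FN N \<subseteq> {xs. set xs \<subseteq> {1..n} \<and> length xs = N}"
    using FN_LW LW_set FN_length by blast
  then show ?thesis using finite_lists_length_eq[of "{1..n}" N] finite_subset by blast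
qed

definition cyl :: "int \<Rightarrow> nat list \<Rightarrow> config set" where
  "cyl p u = {x \<in> W. window x p (length u) = u}"

lemma cyl_open: "open_in_X W (cyl p u)"
  unfolding open_in_X_def
proof (intro conjI ballI)
  show "cyl p u \<subseteq> W" unfolding cyl_def by blast
  fix x assume x: "x \<in> cyl p u"
  show "\<exists>e>0. \<forall>y\<in>W. sdist x y < e \<longrightarrow> y \<in> cyl p u"
  proof (rule exI[of _ "(1/2)^(nat \<bar>p\<bar> + length u)"], intro conjI ballI impI)
    show "(0::real) < (1/2)^(nat \<bar>p\<bar> + length u)" by simp
    fix y assume y: "y \<in> W" "sdist x y < (1/2)^(nat \<bar>p\<bar> + length u)"
    have "window y p (length u) = window x p (length u)"
      by (rule nth_equalityI) (auto intro!: sdist_small[OF y(2), symmetric])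
    then show "y \<in> cyl p u" using x y(1) unfolding cyl_def by simp
  qed
qed

lemma cyl_ne: "u \<in> LW \<Longrightarrow> cyl p u \<noteq> {}"
proof -
  assume "u \<in> LW"
  then obtain w i l where w: "w \<in> W" "u = window w i l" unfolding LW_def by blast
  have "shift_pow (i - p) w \<in> cyl p u"
    unfolding cyl_def using w by (auto simp: window_shift_pow W_shift)
  then show ?thesis by blast
qed

lemma W_trans: "k \<ge> 1 \<Longrightarrow> transitive_pow W (int k)"
  using W_tt unfolding totally_transitive_def by blast

lemma merge: "u \<in> LW \<Longrightarrow> v \<in> LW \<Longrightarrow> \<exists>m\<in>LW. sub u m \<and> sub v m"
proof -
  assume u: "u \<in> LW" and v: "v \<in> LW"
  have tr: "transitive_pow W (int 1)" by (rule W_trans) simp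
  have h: "open_in_X W (cyl 0 u) \<and> open_in_X W (cyl 0 v) \<and> cyl 0 u \<noteq> {} \<and> cyl 0 v \<noteq> {}"
    using cyl_open cyl_ne u v by blast
  obtain j where "shift_pow (int 1 * j) ` cyl 0 u \<inter> cyl 0 v \<noteq> {}"
    using tr[unfolded transitive_pow_def, rule_format, OF h] by (elim exE)
  then obtain x where x: "x \<in> cyl 0 u" "shift_pow j x \<in> cyl 0 v" by auto
  have xW: "x \<in> W" and xu: "window x 0 (length u) = u" and xv: "window x j (length v) = v"
    using x unfolding cyl_def by (auto simp: window_shift_pow)
  let ?i = "min 0 j" let ?l = "nat (max (int (length u)) (j + int (length v)) - min 0 j)"
  have nn: "0 \<le> max (int (length u)) (j + int (length v)) - min 0 j" by (simp add: max_def min_def)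
  have L: "int ?l = max (int (length u)) (j + int (length v)) - min 0 j" using nn by simp
  have "sub (window x 0 (length u)) (window x ?i ?l)"
    apply (rule sub_window) apply simp apply (unfold L) apply simp done
  moreover have "sub (window x j (length v)) (window x ?i ?l)"
    apply (rule sub_window) apply simp apply (unfold L) apply simp done
  ultimately have "sub u (window x ?i ?l)" "sub v (window x ?i ?l)" using xu xv by simp_all
  moreover have "window x ?i ?l \<in> LW" unfolding LW_def using xW by blast
  ultimately show ?thesis by blast
qed

lemma cover: "finite S \<Longrightarrow> S \<subseteq> LW \<Longrightarrow> \<exists>T\<in>LW. \<forall>f\<in>S. sub f T"
proof (induction S rule: finite_induct)
  case empty
  obtain w where "w \<in> W" using W_ne by blast
  then have "window w 0 0 \<in> LW" unfolding LW_def by blast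
  then show ?case by blast
next
  case (insert f S)
  then obtain T where T: "T \<in> LW" "\<forall>g\<in>S. sub g T" by blast
  obtain m where m: "m \<in> LW" "sub f m" "sub T m" using merge[of f T] insert.prems T(1) by blast
  show ?case using m T by (blast intro: sub_trans)
qed

section \<open>Branching\<close>

lemma determ_window:
  assumes nb: "\<forall>S a b. S @ [a] \<in> FN (Suc M) \<and> S @ [b] \<in> FN (Suc M) \<longrightarrow> a = b"
    and w: "w \<in> W" and eq: "window w t M = window w t' M"
  shows "w (t + int M) = w (t' + int M)"
proof -
  have "window w t (Suc M) = window w t M @ [w (t + int M)]"
    using window_append[of w t M 1] by (simp add: window_def)
  moreover have "window w t' (Suc M) = window w t' M @ [w (t' + int M)]"
    using window_append[of w t' M 1] by (simp add: window_def)
  ultimately have "window w t M @ [w (t + int M)] \<in> FN (Suc M)" "window w t M @ [w (t' + int M)] \<in> FN (Suc M)"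
    using window_FN[OF w, of t "Suc M"] window_FN[OF w, of t' "Suc M"] eq by simp_all
  then show ?thesis using nb by blast
qed

lemma determ_step:
  assumes nb: "\<forall>S a b. S @ [a] \<in> FN (Suc M) \<and> S @ [b] \<in> FN (Suc M) \<longrightarrow> a = b"
    and w: "w \<in> W" and eq: "window w t M = window w t' M"
  shows "window w (t + 1) M = window w (t' + 1) M"
proof (rule nth_equalityI)
  fix m assume m: "m < length (window w (t + 1) M)"
  show "window w (t + 1) M ! m = window w (t' + 1) M ! m"
  proof (cases "Suc m < M")
    case True
    have "window w t M ! Suc m = window w t' M ! Suc m" using eq by simp
    then have "w (t + int (Suc m)) = w (t' + int (Suc m))" using True by simp
    then show ?thesis using m by (simp add: add_ac)
  next
    case False
    then have mM: "Suc m = M" using m by simp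
    have "w (t + int M) = w (t' + int M)" by (rule determ_window[OF nb w eq])
    moreover have i1: "(t + 1) + int m = t + int M" "(t' + 1) + int m = t' + int M" using mM by auto
    moreover have "m < M" using m by simp
    ultimately show ?thesis by (simp only: window_nth i1)
  qed
qed simp

lemma determ_shift:
  assumes nb: "\<forall>S a b. S @ [a] \<in> FN (Suc M) \<and> S @ [b] \<in> FN (Suc M) \<longrightarrow> a = b"
    and w: "w \<in> W" and eq: "window w t M = window w t' M"
  shows "w (t + int k + int M) = w (t' + int k + int M)"
proof -
  have "window w (t + int k) M = window w (t' + int k) M"
  proof (induction k)
    case 0 then show ?case using eq by simp
  next
    case (Suc k)
    then have "window w (t + int k + 1) M = window w (t' + int k + 1) M" by (rule determ_step[OF nb w])
    then show ?case by (simp add: add_ac)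
  qed
  then show ?thesis by (rule determ_window[OF nb w])
qed

lemma eventually_periodic_global:
  assumes "\<And>v. v \<ge> st \<Longrightarrow> w (v + int p) = w v"
  shows "v \<ge> st \<Longrightarrow> w (v + int p * int q) = w v"
proof (induction q)
  case 0 then show ?case by simp
next
  case (Suc q)
  have "w (v + int p * int (Suc q)) = w ((v + int p * int q) + int p)" by (simp add: algebra_simps)
  also have "\<dots> = w (v + int p * int q)"
  proof -
    have "0 \<le> int p * int q" by simp
    then have "st \<le> v + int p * int q" using Suc.prems by linarith
    then show ?thesis by (rule assms)
  qed
  also have "\<dots> = w v" using Suc by simp
  finally show ?case .
qed

lemma branching: "\<exists>S a b. a \<noteq> b \<and> S @ [a] \<in> FN (Suc M) \<and> S @ [b] \<in> FN (Suc M)"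
proof (rule ccontr)
  assume "\<not> ?thesis"
  then have nb: "\<forall>S a b. S @ [a] \<in> FN (Suc M) \<and> S @ [b] \<in> FN (Suc M) \<longrightarrow> a = b" by blast
  let ?\<Sigma> = "{xs. set xs \<subseteq> {1..n} \<and> length xs = M}"
  let ?Q = "card ?\<Sigma>"
  have finS: "finite ?\<Sigma>" by (rule finite_lists_length_eq) simp
  have per: "w (v + int (fact ?Q)) = w v" if w: "w \<in> W" for w v
  proof -
    let ?t = "v - int ?Q - int M"
    have "\<not> inj_on (\<lambda>c. window w (?t + int c) M) {0..?Q}"
    proof
      assume inj: "inj_on (\<lambda>c. window w (?t + int c) M) {0..?Q}"
      moreover have "(\<lambda>c. window w (?t + int c) M) ` {0..?Q} \<subseteq> ?\<Sigma>"
        using window_set[OF subsetD[OF W_full w]] by auto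
      ultimately have "card {0..?Q} \<le> ?Q" using finS by (rule card_inj_on_le)
      then show False by simp
    qed
    then obtain c1 c2 where c: "c1 \<in> {0..?Q}" "c2 \<in> {0..?Q}" "c1 \<noteq> c2"
      "window w (?t + int c1) M = window w (?t + int c2) M"
      unfolding inj_on_def by blast
    obtain a b where ab: "a < b" "b \<le> ?Q" "window w (?t + int a) M = window w (?t + int b) M"
    proof (cases "c1 < c2")
      case True then show ?thesis using that[of c1 c2] c by auto
    next
      case False then show ?thesis using that[of c2 c1] c by auto
    qed
    let ?p = "b - a"
    have ev: "w (u + int ?p) = w u" if u: "u \<ge> ?t + int a + int M" for u
    proof -
      let ?k = "nat (u - (?t + int a + int M))"
      have "w (?t + int b + int ?k + int M) = w (?t + int a + int ?k + int M)"
        using determ_shift[OF nb w ab(3), of ?k] by simp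
      moreover have "?t + int a + int ?k + int M = u" using u by simp
      moreover have "?t + int b + int ?k + int M = u + int ?p" using u ab(1) by simp
      ultimately show ?thesis by simp
    qed
    have dvd: "?p dvd fact ?Q" using ab by (intro dvd_fact) auto
    then obtain q where q: "fact ?Q = ?p * q" by (elim dvdE)
    have "w (v + int ?p * int q) = w v"
    proof -
      have vge: "v \<ge> ?t + int a + int M" using ab by simp
      have "\<And>u. ?t + int a + int M \<le> u \<Longrightarrow> w (u + int ?p) = w u" using ev by blast
      from eventually_periodic_global[where w=w and st="?t + int a + int M" and p="b - a", OF this vge]
      show ?thesis .
    qed
    moreover have "int (fact ?Q) = int ?p * int q" using q by simp
    ultimately show ?thesis by simp
  qed
  have "W \<subseteq> {x \<in> full_shift n. shift_pow (int (fact ?Q)) x = x}"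
    using W_full per by (auto simp: shift_pow_def fun_eq_iff)
  moreover have "finite {x \<in> full_shift n. shift_pow (int (fact ?Q)) x = x}"
    by (rule periodic_finite) simp
  ultimately show False using W_inf finite_subset by blast
qed

end


lemma sub_prefix_take: "sub (take k A) A"
  using sub_app1[of "take k A" "drop k A"] by simp

lemma sub_suffix_drop: "sub (drop k A) A"
  using sub_app2[of "drop k A" "take k A"] by simp

context Wc
begin

definition legal :: "nat \<Rightarrow> nat list \<Rightarrow> bool" where
  "legal N w \<longleftrightarrow> (\<forall>v. sub v w \<and> length v = N \<longrightarrow> v \<in> FN N)"

lemma legal_LW: "w \<in> LW \<Longrightarrow> legal N w"
  unfolding legal_def
proof (intro allI impI)
  fix v assume w: "w \<in> LW" and v: "sub v w \<and> length v = N"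
  then obtain x i l where x: "x \<in> W" "w = window x i l" unfolding LW_def by blast
  then obtain i' where "v = window x i' (length v)" using sub_window_window v by blast
  then show "v \<in> FN N" using window_FN[OF x(1)] v by metis
qed

lemma legal_sub: "sub v w \<Longrightarrow> legal N w \<Longrightarrow> legal N v"
  unfolding legal_def by (blast intro: sub_trans)

lemma glue:
  assumes S: "length S = M" and l1: "legal (Suc M) (U @ S)" and l2: "legal (Suc M) (S @ Y)"
  shows "legal (Suc M) (U @ S @ Y)"
  unfolding legal_def
proof (intro allI impI)
  fix v assume h: "sub v (U @ S @ Y) \<and> length v = Suc M"
  then obtain p where p: "p + length v \<le> length (U @ S @ Y)" "\<forall>t<length v. v!t = (U @ S @ Y)!(p+t)"
    unfolding sub_def by blast
  show "v \<in> FN (Suc M)"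
  proof (cases "p + Suc M \<le> length U + M")
    case True
    have "sub v (U @ S)" unfolding sub_def
    proof (rule exI[of _ p], intro conjI allI impI)
      show "p + length v \<le> length (U @ S)" using True h S by simp
      fix t assume t: "t < length v"
      have "p + t < length (U @ S)" using True t h S by simp
      then have "(U @ S @ Y) ! (p+t) = (U @ S) ! (p+t)" using nth_append_left[of "p+t" "U @ S" Y] by simp
      then show "v ! t = (U @ S) ! (p + t)" using p(2) t by simp
    qed
    then show ?thesis using l1 h unfolding legal_def by blast
  next
    case False
    then have pU: "length U \<le> p" using S by simp
    have "sub v (S @ Y)" unfolding sub_def
    proof (rule exI[of _ "p - length U"], intro conjI allI impI)
      show "p - length U + length v \<le> length (S @ Y)" using p(1) pU by simp
      fix t assume t: "t < length v"
      have "(U @ S @ Y) ! (p+t) = (S @ Y) ! (p - length U + t)" using pU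
        by (simp add: nth_append)
      then show "v ! t = (S @ Y) ! (p - length U + t)" using p(2) t by simp
    qed
    then show ?thesis using l2 h unfolding legal_def by blast
  qed
qed

lemma const_window:
  assumes "window x 0 L = T" "window x 1 L = T"
  shows "\<forall>t<L. T!t = x 0"
proof -
  have "t < L \<longrightarrow> x (int t) = x 0" for t
  proof (induction t)
    case 0 then show ?case by simp
  next
    case (Suc t)
    show ?case
    proof
      assume "Suc t < L"
      then have "x (1 + int t) = T ! t" "x (0 + int t) = T ! t"
        using assms by (metis Suc_lessD window_nth)+
      then show "x (int (Suc t)) = x 0" using Suc \<open>Suc t < L\<close> by (simp add: add_ac)
    qed
  qed
  then show ?thesis using assms(1) by (metis add_0 window_nth)
qed

lemma loop_exists:
  assumes T: "T \<in> LW" and f: "sub f1 T" "sub f2 T" "f1 \<noteq> f2" "length f1 = length f2"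
  shows "\<exists>A. take (length T) A = T \<and> length T \<le> length A \<and> A @ T \<in> LW"
proof -
  let ?k = "length T + 2"
  have tr: "transitive_pow W (int ?k)" by (rule W_trans) simp
  have h: "open_in_X W (cyl 0 T) \<and> open_in_X W (cyl 1 T) \<and> cyl 0 T \<noteq> {} \<and> cyl 1 T \<noteq> {}"
    using cyl_open cyl_ne T by blast
  obtain j where "shift_pow (int ?k * j) ` cyl 0 T \<inter> cyl 1 T \<noteq> {}"
    using tr[unfolded transitive_pow_def, rule_format, OF h] by (elim exE)
  then obtain x where x: "x \<in> cyl 0 T" "shift_pow (int ?k * j) x \<in> cyl 1 T" by auto
  let ?d = "1 + int ?k * j"
  have xW: "x \<in> W" and x0: "window x 0 (length T) = T" and xd: "window x ?d (length T) = T"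
    using x unfolding cyl_def by (auto simp: window_shift_pow add_ac)
  have j0: "j \<noteq> 0"
  proof
    assume "j = 0"
    then have x1: "window x 1 (length T) = T" using xd by simp
    have c: "\<forall>t<length T. T!t = x 0" by (rule const_window[OF x0 x1])
    have cf: "\<forall>t<length g. g!t = x 0" if "sub g T" for g
      using that c unfolding sub_def by fastforce
    have "f1 = f2" by (rule nth_equalityI) (use f cf in auto)
    with f(3) show False by simp
  qed
  show ?thesis
  proof (cases "j > 0")
    case True
    then have dpos: "?d \<ge> int (length T) + 1"
    proof -
      have "int ?k * j \<ge> int ?k * 1" using True by (intro mult_left_mono) auto
      then have "int ?k * j \<ge> int ?k" by simp
      moreover have "int ?k = int (length T) + 2" by simp
      ultimately show ?thesis by linarith
    qed
    let ?A = "window x 0 (nat ?d)"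
    have "window x 0 (nat ?d + length T) = ?A @ window x (0 + int (nat ?d)) (length T)"
      by (rule window_append)
    also have "0 + int (nat ?d) = ?d" using dpos by simp
    finally have AT: "?A @ T = window x 0 (nat ?d + length T)" using xd by simp
    have "take (length T) ?A = T" using x0 dpos by (simp add: take_window)
    moreover have "length T \<le> length ?A" using dpos by simp
    moreover have "?A @ T \<in> LW" unfolding AT LW_def using xW by blast
    ultimately show ?thesis by blast
  next
    case False
    then have "j < 0" using j0 by simp
    then have dneg: "?d \<le> - int (length T) - 1"
    proof -
      have "int ?k * j \<le> int ?k * (-1)" using \<open>j < 0\<close> by (intro mult_left_mono) auto
      then have "int ?k * j \<le> - int ?k" by simp
      moreover have "int ?k = int (length T) + 2" by simp
      ultimately show ?thesis by linarith
    qed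
    let ?A = "window x ?d (nat (- ?d))"
    have "window x ?d (nat (- ?d) + length T) = ?A @ window x (?d + int (nat (- ?d))) (length T)"
      by (rule window_append)
    also have "?d + int (nat (- ?d)) = 0" using dneg by simp
    finally have AT: "?A @ T = window x ?d (nat (- ?d) + length T)" using x0 by simp
    have "take (length T) ?A = T" using xd dneg by (simp add: take_window)
    moreover have "length T \<le> length ?A" using dneg by simp
    moreover have "?A @ T \<in> LW" unfolding AT LW_def using xW by blast
    ultimately show ?thesis by blast
  qed
qed

end


context Wc
begin

definition Lp :: "nat \<Rightarrow> nat list \<Rightarrow> nat list \<Rightarrow> bool" where
  "Lp M J w \<longleftrightarrow> legal (Suc M) (w @ J) \<and> take M w = J \<and> M \<le> length w"

lemma Lp_app:
  assumes J: "length J = M" and u: "Lp M J u" and v: "Lp M J v"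
  shows "Lp M J (u @ v)"
proof -
  have v': "v = J @ drop M v" using v unfolding Lp_def by (metis append_take_drop_id)
  have "legal (Suc M) (u @ J @ (drop M v @ J))"
  proof (rule glue[OF J])
    show "legal (Suc M) (u @ J)" using u unfolding Lp_def by blast
    have "legal (Suc M) (v @ J)" using v unfolding Lp_def by blast
    then show "legal (Suc M) (J @ drop M v @ J)" using v' by (metis append.assoc)
  qed
  then have "legal (Suc M) ((u @ v) @ J)" using v' by (metis append.assoc)
  moreover have "take M (u @ v) = J" using u unfolding Lp_def by simp
  moreover have "M \<le> length (u @ v)" using u unfolding Lp_def by simp
  ultimately show ?thesis unfolding Lp_def by blast
qed

lemma Lp_pow: "length J = M \<Longrightarrow> Lp M J u \<Longrightarrow> Lp M J (pow (Suc c) u)"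
proof (induction c)
  case 0 then show ?case by (simp add: pow_Suc)
next
  case (Suc c)
  then show ?case using Lp_app[of J M u "pow (Suc c) u"] by (simp add: pow_Suc[of "Suc c"])
qed

lemma Lp_fold:
  assumes J: "length J = M" and g: "Lp M J g" and f: "\<And>i. i \<in> set xs \<Longrightarrow> Lp M J (f i)"
  shows "Lp M J (g @ concat (map f xs))"
  using g f
proof (induction xs arbitrary: g)
  case Nil then show ?case by simp
next
  case (Cons i xs)
  have "Lp M J (g @ f i)" using Lp_app[OF J] Cons.prems by simp
  then have "Lp M J ((g @ f i) @ concat (map f xs))" using Cons.prems by (intro Cons.IH) auto
  then show ?case by simp
qed

lemma Lp_Pw:
  assumes J: "length J = M" and A: "Lp M J A" and C: "Lp M J C"
  shows "Lp M J (Pw A C K)"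
proof (induction K rule: less_induct)
  case (less K)
  show ?case
  proof (cases K)
    case 0 then show ?thesis using A by simp
  next
    case (Suc K')
    show ?thesis
    proof (cases K')
      case 0 then show ?thesis using Suc Lp_app[OF J A C] by simp
    next
      case (Suc k)
      have base: "Lp M J (Pw A C (Suc k))" using less.IH \<open>K = Suc K'\<close> Suc by simp
      have "Lp M J (Pw A C (Suc k) @ concat (map (\<lambda>i. pow (k+2) (Pw A C i) @ Pw A C (Suc k)) [0..<k+2]))"
      proof (rule Lp_fold[OF J base])
        fix i assume "i \<in> set [0..<k+2]"
        then have "i < K" using \<open>K = Suc K'\<close> Suc by auto
        then have "Lp M J (Pw A C i)" by (rule less.IH)
        then have "Lp M J (pow (Suc (Suc k)) (Pw A C i))" using Lp_pow[OF J] by blast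
        then show "Lp M J (pow (k+2) (Pw A C i) @ Pw A C (Suc k))"
          using Lp_app[OF J _ base] by simp
      qed
      then show ?thesis using \<open>K = Suc K'\<close> Suc by simp
    qed
  qed
qed

lemma words:
  "\<exists>A C. constr n A C \<and> (\<forall>K. legal (Suc M) (Pw A C K)) \<and> (\<forall>f\<in>FN (Suc M). sub f A)"
proof -
  obtain S a b where ab: "a \<noteq> b" "S @ [a] \<in> FN (Suc M)" "S @ [b] \<in> FN (Suc M)"
    using branching by blast
  have lS: "length S = M" using FN_length[OF ab(2)] by simp
  obtain T where T: "T \<in> LW" "\<forall>f\<in>FN (Suc M). sub f T"
    using cover[OF FN_finite FN_LW] by blast
  have f12: "sub (S @ [a]) T" "sub (S @ [b]) T" using T ab by auto
  obtain A where A: "take (length T) A = T" "length T \<le> length A" "A @ T \<in> LW"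
    using loop_exists[OF T(1) f12] ab(1) by auto
  have lT: "Suc M \<le> length T" using sub_length[OF f12(1)] lS by simp
  let ?J = "take M T"
  have lJ: "length ?J = M" using lT by simp
  have TA: "sub T A" using sub_prefix_take[of "length T" A] A(1) by simp
  have TJ: "T = ?J @ drop M T" by simp
  have legAJ: "legal (Suc M) (A @ ?J)"
  proof -
    have "A @ T = (A @ ?J) @ drop M T" by simp
    then have "sub (A @ ?J) (A @ T)" using sub_app1[of "A @ ?J" "drop M T"] by simp
    then show ?thesis using legal_LW[OF A(3)] legal_sub by blast
  qed
  have takeA: "take M A = ?J"
  proof -
    have "take M T = take M (take (length T) A)" using A(1) by simp
    also have "\<dots> = take M A" using lT by (simp add: min_def)
    finally show ?thesis by simp
  qed
  have LpA: "Lp M ?J A" unfolding Lp_def using legAJ takeA A(2) lT by simp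
  obtain p1 where p1: "p1 + Suc M \<le> length A" "S @ [a] = take (Suc M) (drop p1 A)"
    using sub_eq_take_drop[OF sub_trans[OF f12(1) TA]] lS by auto
  obtain p2 where p2: "p2 + Suc M \<le> length A" "S @ [b] = take (Suc M) (drop p2 A)"
    using sub_eq_take_drop[OF sub_trans[OF f12(2) TA]] lS by auto
  let ?C = "take (p1 + M) A @ [b] @ drop (p2 + Suc M) A"
  have e1: "take (p1 + M) A = take p1 A @ S"
  proof -
    have "take (p1 + M) A = take p1 A @ take M (drop p1 A)" by (simp add: take_add)
    moreover have "take M (drop p1 A) = S"
      using arg_cong[OF p1(2), of "take M"] lS by simp
    ultimately show ?thesis by simp
  qed
  have e2: "drop p2 A = S @ [b] @ drop (p2 + Suc M) A"
  proof -
    have "drop p2 A = take (Suc M) (drop p2 A) @ drop (Suc M) (drop p2 A)"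
      by (rule append_take_drop_id[symmetric])
    also have "drop (Suc M) (drop p2 A) = drop (p2 + Suc M) A" by (simp add: add.commute)
    finally show ?thesis using p2(2)[symmetric] by simp
  qed
  have legC: "legal (Suc M) (?C @ ?J)"
  proof -
    have "legal (Suc M) (take p1 A @ S @ ([b] @ drop (p2 + Suc M) A @ ?J))"
    proof (rule glue[OF lS])
      have "sub (take (p1 + M) A) (A @ ?J)" using sub_prefix_take sub_appendR by blast
      then have "sub (take p1 A @ S) (A @ ?J)" using e1 by simp
      then show "legal (Suc M) (take p1 A @ S)" using legAJ legal_sub by blast
      have "drop p2 A @ ?J = drop p2 (A @ ?J)" using p2(1) by simp
      then have "sub (drop p2 A @ ?J) (A @ ?J)" using sub_suffix_drop[of p2 "A @ ?J"] by simp
      then have "legal (Suc M) (drop p2 A @ ?J)" using legAJ legal_sub by blast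
      then show "legal (Suc M) (S @ [b] @ drop (p2 + Suc M) A @ ?J)" using e2 by simp
    qed
    then show ?thesis using e1 by simp
  qed
  have takeC: "take M ?C = ?J"
  proof -
    have "take M ?C = take M (take (p1 + M) A)" using p1(1) by simp
    also have "\<dots> = take M A" by simp
    finally show ?thesis using takeA by simp
  qed
  have LpC: "Lp M ?J ?C" unfolding Lp_def using legC takeC p1(1) by simp
  have allP: "legal (Suc M) (Pw A ?C K)" for K
  proof -
    have "Lp M ?J (Pw A ?C K)" by (rule Lp_Pw[OF lJ LpA LpC])
    then have "legal (Suc M) (Pw A ?C K @ ?J)" unfolding Lp_def by blast
    then show ?thesis using legal_sub sub_app1 by blast
  qed
  have cstr: "constr n A ?C"
  proof
    show "A \<noteq> []" using A(2) lT by auto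
    show "?C \<noteq> []" by simp
    have sA: "set A \<subseteq> {1..n}"
      using LW_set[OF A(3)] by auto
    have "b \<in> set (S @ [b])" by simp
    then have "b \<in> {1..n}" using LW_set FN_LW ab(3) by blast
    moreover have "set ?C \<subseteq> set A \<union> {b}"
    proof -
      have "set (take (p1 + M) A) \<subseteq> set A" by (rule set_take_subset)
      moreover have "set (drop (p2 + Suc M) A) \<subseteq> set A" by (rule set_drop_subset)
      ultimately show ?thesis by auto
    qed
    ultimately show "set A \<union> set ?C \<subseteq> {1..n}" using sA by blast
    have q1: "A ! (p1 + M) = a"
    proof -
      have "(S @ [a]) ! M = take (Suc M) (drop p1 A) ! M" using p1(2) by simp
      moreover have "(S @ [a]) ! M = a" using lS by (metis nth_append_length)
      ultimately show ?thesis using p1(1) by simp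
    qed
    have q2: "?C ! (p1 + M) = b" using p1(1) by (simp add: nth_append)
    show "\<exists>q. q < length A \<and> q < length ?C \<and> A ! q \<noteq> ?C ! q"
      by (rule exI[of _ "p1 + M"]) (use q1 q2 p1(1) ab(1) in auto)
  qed
  have "\<forall>f\<in>FN (Suc M). sub f A" using T(2) TA sub_trans by blast
  then show ?thesis using cstr allP by blast
qed

end


lemma hausdorff_bound:
  assumes ne: "X \<noteq> {}" "W \<noteq> {}"
    and h1: "\<forall>x\<in>X. \<exists>w\<in>W. sdist x w \<le> B" and h2: "\<forall>w\<in>W. \<exists>x\<in>X. sdist x w \<le> B"
  shows "0 \<le> hausdorff X W \<and> hausdorff X W \<le> B"
proof -
  have bb1: "bdd_below ((\<lambda>b. sdist a b) ` W)" for a by (rule bdd_belowI[of _ 0]) (auto simp: sdist_nonneg)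
  have bb2: "bdd_below ((\<lambda>a. sdist a b) ` X)" for b by (rule bdd_belowI[of _ 0]) (auto simp: sdist_nonneg)
  have s1: "(SUP a\<in>X. INF b\<in>W. sdist a b) \<le> B"
  proof (rule cSUP_least[OF ne(1)])
    fix a assume "a \<in> X"
    then obtain w where "w \<in> W" "sdist a w \<le> B" using h1 by blast
    then show "(INF b\<in>W. sdist a b) \<le> B" by (intro cINF_lower2[OF bb1])
  qed
  have s2: "(SUP b\<in>W. INF a\<in>X. sdist a b) \<le> B"
  proof (rule cSUP_least[OF ne(2)])
    fix w assume "w \<in> W"
    then obtain x where "x \<in> X" "sdist x w \<le> B" using h2 by blast
    then show "(INF a\<in>X. sdist a w) \<le> B" by (intro cINF_lower2[OF bb2])
  qed
  obtain a0 where a0: "a0 \<in> X" using ne(1) by blast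
  obtain w0 where w0: "w0 \<in> W" using ne(2) by blast
  have ba: "bdd_above ((\<lambda>a. INF b\<in>W. sdist a b) ` X)"
  proof (rule bdd_aboveI[of _ 1])
    fix y assume "y \<in> (\<lambda>a. INF b\<in>W. sdist a b) ` X"
    then obtain a where "y = (INF b\<in>W. sdist a b)" by blast
    moreover have "(INF b\<in>W. sdist a b) \<le> 1" by (rule cINF_lower2[OF bb1 w0]) (rule sdist_le1)
    ultimately show "y \<le> 1" by simp
  qed
  have "0 \<le> (INF b\<in>W. sdist a0 b)" by (rule cINF_greatest[OF ne(2)]) (rule sdist_nonneg)
  also have "\<dots> \<le> (SUP a\<in>X. INF b\<in>W. sdist a b)" by (rule cSUP_upper[OF a0 ba])
  finally have "0 \<le> (SUP a\<in>X. INF b\<in>W. sdist a b)" .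
  then show ?thesis using s1 s2 unfolding hausdorff_def by simp
qed

context Wc
begin

lemma approx_m:
  "\<exists>A C. constr n A C \<and> 0 \<le> hausdorff (XS n A C) W \<and> hausdorff (XS n A C) W \<le> (1/2)^(Suc m)"
proof -
  obtain A C where AC: "constr n A C" "\<forall>K. legal (Suc (2*m)) (Pw A C K)" "\<forall>f\<in>FN (Suc (2*m)). sub f A"
    using words[of "2*m"] by blast
  interpret c: constr n A C by (rule AC(1))
  have N: "2 * m + 1 = Suc (2*m)" by simp
  have h1: "\<forall>x\<in>XS n A C. \<exists>w\<in>W. sdist x w \<le> (1/2)^(Suc m)"
  proof
    fix x assume x: "x \<in> XS n A C"
    let ?u = "window x (- int m) (2*m+1)"
    have "?u \<in> LX A C" using x unfolding XS_def by blast
    then obtain K where "sub ?u (Pw A C K)" unfolding LX_def by blast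
    then have "?u \<in> FN (Suc (2*m))" using AC(2) unfolding legal_def by simp
    then obtain w0 where w0: "w0 \<in> W" "?u = window w0 0 (Suc (2*m))" unfolding FN_def by blast
    let ?w = "shift_pow (int m) w0"
    have "window ?w (- int m) (2*m+1) = window w0 0 (2*m+1)" by (simp add: window_shift_pow)
    then have "window x (- int m) (2*m+1) = window ?w (- int m) (2*m+1)" using w0(2) by simp
    then have "sdist x ?w \<le> (1/2)^(Suc m)" by (rule window_agree_sdist)
    moreover have "?w \<in> W" using W_shift w0(1) by blast
    ultimately show "\<exists>w\<in>W. sdist x w \<le> (1/2)^(Suc m)" by blast
  qed
  have h2: "\<forall>w\<in>W. \<exists>x\<in>XS n A C. sdist x w \<le> (1/2)^(Suc m)"
  proof
    fix w assume w: "w \<in> W"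
    let ?u = "window w (- int m) (2*m+1)"
    have "?u \<in> FN (Suc (2*m))" using window_FN[OF w] N by metis
    then have "sub ?u (Pw A C 0)" using AC(3) by simp
    then obtain s where s: "?u = window (pt (Pw A C 0)) s (2*m+1)"
      using sub_Pw_window[OF c.a_ne] by fastforce
    let ?x = "shift_pow (s + int m) (pt (Pw A C 0))"
    have xX: "?x \<in> XS n A C" by (rule c.X_shift[OF c.pt_in_X])
    have "window ?x (- int m) (2*m+1) = window (pt (Pw A C 0)) s (2*m+1)" by (simp add: window_shift_pow)
    then have "window ?x (- int m) (2*m+1) = window w (- int m) (2*m+1)" using s by simp
    then have "sdist ?x w \<le> (1/2)^(Suc m)" by (rule window_agree_sdist)
    then show "\<exists>x\<in>XS n A C. sdist x w \<le> (1/2)^(Suc m)" using xX by blast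
  qed
  have "XS n A C \<noteq> {}" using c.X_infinite by auto
  then have "0 \<le> hausdorff (XS n A C) W \<and> hausdorff (XS n A C) W \<le> (1/2)^(Suc m)"
    using hausdorff_bound h1 h2 W_ne by blast
  then show ?thesis using AC(1) by blast
qed

end

theorem theorem2p10:
  fixes n :: nat and W :: "config set"
  assumes "n \<ge> 2" and "subshift n W" and "infinite W" and "totally_transitive W"
  shows "\<exists>X :: nat \<Rightarrow> config set.
           (\<forall>m. subshift n (X m) \<and> CAM (X m)) \<and>
           (\<lambda>m. hausdorff (X m) W) \<longlonglongrightarrow> 0"
proof -
  interpret w: Wc n W using assms(2,3,4) by unfold_locales
  have "\<forall>m. \<exists>p. constr n (fst p) (snd p) \<and> 0 \<le> hausdorff (XS n (fst p) (snd p)) W \<and>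
          hausdorff (XS n (fst p) (snd p)) W \<le> (1/2)^(Suc m)"
    using w.approx_m by fastforce
  then obtain f where f: "\<And>m. constr n (fst (f m)) (snd (f m)) \<and> 0 \<le> hausdorff (XS n (fst (f m)) (snd (f m))) W \<and>
          hausdorff (XS n (fst (f m)) (snd (f m))) W \<le> (1/2)^(Suc m)"
    by metis
  let ?X = "\<lambda>m. XS n (fst (f m)) (snd (f m))"
  have "subshift n (?X m) \<and> CAM (?X m)" for m
  proof -
    interpret c: constr n "fst (f m)" "snd (f m)" using f by blast
    show ?thesis using c.X_subshift c.X_CAM by blast
  qed
  moreover have "(\<lambda>m. hausdorff (?X m) W) \<longlonglongrightarrow> 0"
  proof (rule real_tendsto_sandwich[where f="\<lambda>_. 0" and h="\<lambda>m. (1/2)^(Suc m)"])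
    show "\<forall>\<^sub>F m in sequentially. 0 \<le> hausdorff (?X m) W" using f by simp
    show "\<forall>\<^sub>F m in sequentially. hausdorff (?X m) W \<le> (1/2)^(Suc m)" using f by simp
    show "(\<lambda>_. 0::real) \<longlonglongrightarrow> 0" by simp
    have "(\<lambda>m. (1/2::real)^m) \<longlonglongrightarrow> 0" by (rule LIMSEQ_power_zero) simp
    then show "(\<lambda>m. (1/2::real)^(Suc m)) \<longlonglongrightarrow> 0" by (rule LIMSEQ_Suc)
  qed
  ultimately have "(\<forall>m. subshift n (?X m) \<and> CAM (?X m)) \<and> (\<lambda>m. hausdorff (?X m) W) \<longlonglongrightarrow> 0"
    by blast
  then show ?thesis by (rule exI[of _ ?X])
qed

end
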